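(* If $\lambda$ is $k$-small, then $$\sigma\big(g^{(k)}_\lambda(y|b)\big)=\Big(\prod_{x\in\mathrm{diag}(\lambda)}e^{a_{r(x)+1}-a_{b(x)}}\Big)\tilde g^{(k)}_\lambda(y|b),$$ where $\mathrm{diag}(\lambda)$ is the set of boxes $(i,i)\in\lambda$, and for $x=(i,i)$, $r(x)=\lambda_i-i\bmod n$ is the $n$-residue of the rightmost box of row $i$ and $b(x)=i-\lambda'_i\bmod n$ is the $n$-residue of the bottom box of column $i$.
   Context: Fix $n\ge2$, $k=n-1$. $R(T)=\mathbb{Z}[e^{\pm a_1},\dots,e^{\pm a_n}]/(e^{a_1+\cdots+a_n}-1)$; subscripts of $a_i,b_i$ mod $n$ in $\{1,\dots,n\}$; $b_i=1-e^{-a_i}$. $\hat\Lambda$: symmetric formal power series in $y=(y_1,y_2,\dots)$ with coefficients in the fraction field of $R(T)$; $\Omega(b_i|y)=\prod_{j\ge1}(1-b_iy_j)^{-1}$. For $1\le i\le n-1$, $s_i$ exchanges $a_i,a_{i+1}$ in coefficients; $s_\theta$ exchanges $a_1,a_n$; $s_0(f)=\frac{\Omega(b_1|y)}{\Omega(b_n|y)}s_\theta(f)$. $\alpha_i=a_i-a_{i+1}$, $\alpha_0=a_n-a_1$, $T_i=(1-e^{\alpha_i})^{-1}(s_i-1)$, $D_i=T_i+1$; $T_x,D_x$ via reduced words in $\hat W=\langle s_0,\dots,s_{n-1}\rangle$; $g^{(k)}_x=T_x(1)$, $\tilde g^{(k)}_x=D_x(1)$ for $x\in\hat W^0$ (minimal-length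 representatives of $\hat W/S_n$). The $n$-residue of box (row $r$, column $c$) is $c-r\bmod n$; $\lambda$ is $k$-small if $\lambda_1+\ell(\lambda)\le n$, and then $x_\lambda$ is obtained by adding its boxes one at a time, a box of residue $i$ contributing a left factor $s_i$; $g^{(k)}_\lambda=g^{(k)}_{x_\lambda}$, $\tilde g^{(k)}_\lambda=\tilde g^{(k)}_{x_\lambda}$. $\sigma$ is the automorphism of $\hat\Lambda$, linear over coefficients, sending $f(y_1,y_2,\dots)$ to $f(1,y_1,y_2,\dots)$. *)

theory Defs
  imports "HOL-Library.Poly_Mapping" "HOL-Computational_Algebra.Fraction_Field"
          "HOL-Computational_Algebra.Polynomial_FPS"
begin

text \<open>Laurent polynomials with integer coefficients: a monomial is an exponent
vector (nat =>0 int).  R(T) = Z[e^{+-a_1},...,e^{+-a_n}]/(e^{a_1+...+a_n}-1) is realised as the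
subring of Laurent polynomials in the variables 1..n-1, via e^{a_i} = x_i for i<n and
e^{a_n} = (x_1 ... x_{n-1})^{-1}.  Its fraction field sits inside the fraction field
of lpoly.\<close>

type_synonym lpoly = "(nat \<Rightarrow>\<^sub>0 int) \<Rightarrow>\<^sub>0 int"
type_synonym coef = "lpoly fract"

text \<open>Exponent vector of e^{a_i}, for 1 <= i <= n.\<close>
definition expo :: "nat \<Rightarrow> nat \<Rightarrow> (nat \<Rightarrow>\<^sub>0 int)" where
  "expo n i = (if i = n then - (\<Sum>j\<in>{1..<n}. Poly_Mapping.single j 1)
               else Poly_Mapping.single i 1)"

definition eA :: "nat \<Rightarrow> nat \<Rightarrow> coef" where
  "eA n i = Fraction_Field.Fract (Poly_Mapping.single (expo n i) 1) 1"

text \<open>Subscripts of a_i, b_i are read mod n in {1..n}.\<close>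
definition aidx :: "nat \<Rightarrow> int \<Rightarrow> nat" where
  "aidx n k = (let r = nat (k mod int n) in if r = 0 then n else r)"

definition bvar :: "nat \<Rightarrow> nat \<Rightarrow> coef" where
  "bvar n i = 1 - inverse (eA n i)"

definition eAlpha :: "nat \<Rightarrow> nat \<Rightarrow> coef" where
  "eAlpha n i = (if i = 0 then eA n n / eA n 1 else eA n i / eA n (i + 1))"

definition transp_fn :: "nat \<Rightarrow> nat \<Rightarrow> nat \<Rightarrow> nat" where
  "transp_fn i j k = (if k = i then j else if k = j then i else k)"

text \<open>Action of a permutation w of {1..n} (a_i |-> a_{w i}) on exponent vectors:
the part on the variables 1..n-1 encodes sum_{i<n} c_i a_i, everything else is
left untouched.\<close>
definition perm_expo :: "nat \<Rightarrow> (nat \<Rightarrow> nat) \<Rightarrow> (nat \<Rightarrow>\<^sub>0 int) \<Rightarrow> (nat \<Rightarrow>\<^sub>0 int)" where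
  "perm_expo n w c =
     (c - (\<Sum>i\<in>{1..<n}. Poly_Mapping.single i (Poly_Mapping.lookup c i)))
     + (\<Sum>i\<in>{1..<n}. (if w i = n
            then (\<Sum>j\<in>{1..<n}. Poly_Mapping.single j (- Poly_Mapping.lookup c i))
            else Poly_Mapping.single (w i) (Poly_Mapping.lookup c i)))"

definition lpoly_perm :: "nat \<Rightarrow> (nat \<Rightarrow> nat) \<Rightarrow> lpoly \<Rightarrow> lpoly" where
  "lpoly_perm n w f = frag_extend (\<lambda>c. Poly_Mapping.single (perm_expo n w c) 1) f"

definition coef_perm :: "nat \<Rightarrow> (nat \<Rightarrow> nat) \<Rightarrow> coef \<Rightarrow> coef" where
  "coef_perm n w x = (let pq = (SOME pq. snd pq \<noteq> 0 \<and> x = Fraction_Field.Fract (fst pq) (snd pq))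
                      in Fraction_Field.Fract (lpoly_perm n w (fst pq)) (lpoly_perm n w (snd pq)))"

text \<open>Variable y_{j+1} is indexed by j :: nat; monomials are finitely supported
exponent vectors; a series is its coefficient function.\<close>
type_synonym ser = "(nat \<Rightarrow>\<^sub>0 nat) \<Rightarrow> coef"

definition ser_one :: ser where
  "ser_one m = (if m = 0 then 1 else 0)"

definition ser_mult :: "ser \<Rightarrow> ser \<Rightarrow> ser" where
  "ser_mult f g m = (\<Sum>p\<in>{p. fst p + snd p = m}. f (fst p) * g (snd p))"

definition ser_smult :: "coef \<Rightarrow> ser \<Rightarrow> ser" where
  "ser_smult c f m = c * f m"

definition tdeg :: "(nat \<Rightarrow>\<^sub>0 nat) \<Rightarrow> nat" where
  "tdeg m = (\<Sum>j\<in>Poly_Mapping.keys m. Poly_Mapping.lookup m j)"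

text \<open>Omega(b|y) = prod_j (1 - b y_j)^{-1}\<close>
definition Omega :: "coef \<Rightarrow> ser" where
  "Omega b m = b ^ tdeg m"

text \<open>Omega(b|y)^{-1} = prod_j (1 - b y_j)\<close>
definition Omega_inv :: "coef \<Rightarrow> ser" where
  "Omega_inv b m = (if (\<forall>j. Poly_Mapping.lookup m j \<le> 1) then (- b) ^ tdeg m else 0)"

definition s_op :: "nat \<Rightarrow> nat \<Rightarrow> ser \<Rightarrow> ser" where
  "s_op n i f = (if i = 0
     then ser_mult (ser_mult (Omega (bvar n 1)) (Omega_inv (bvar n n)))
                   (\<lambda>m. coef_perm n (transp_fn 1 n) (f m))
     else (\<lambda>m. coef_perm n (transp_fn i (i + 1)) (f m)))"

definition T_op :: "nat \<Rightarrow> nat \<Rightarrow> ser \<Rightarrow> ser" where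
  "T_op n i f m = (s_op n i f m - f m) / (1 - eAlpha n i)"

definition D_op :: "nat \<Rightarrow> nat \<Rightarrow> ser \<Rightarrow> ser" where
  "D_op n i f m = T_op n i f m + f m"

text \<open>A partition: weakly decreasing list of positive parts; lam ! (r-1) = lambda_r.\<close>
definition is_partition :: "nat list \<Rightarrow> bool" where
  "is_partition lam \<longleftrightarrow> sorted_wrt (\<ge>) lam \<and> 0 \<notin> set lam"

definition k_small :: "nat \<Rightarrow> nat list \<Rightarrow> bool" where
  "k_small n lam \<longleftrightarrow> (if lam = [] then 0 else hd lam) + length lam \<le> n"

text \<open>n-residue of the box in row r, column c (1-based).\<close>
definition residue :: "nat \<Rightarrow> nat \<Rightarrow> nat \<Rightarrow> nat" where
  "residue n r c = nat ((int c - int r) mod int n)"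

text \<open>Residues of the boxes of lam, in the order in which they are added
(row by row, left to right); this order builds lam through partitions.\<close>
definition res_word :: "nat \<Rightarrow> nat list \<Rightarrow> nat list" where
  "res_word n lam = concat (map (\<lambda>r. map (\<lambda>c. residue n r c) [1..<lam ! (r - 1) + 1])
                                [1..<length lam + 1])"

text \<open>x_lam = s_{i_m} ... s_{i_1} where i_1 is the residue of the first box added;
T_{x_lam} = T_{i_m} o ... o T_{i_1}.\<close>
definition g_k :: "nat \<Rightarrow> nat list \<Rightarrow> ser" where
  "g_k n lam = foldl (\<lambda>f i. T_op n i f) ser_one (res_word n lam)"

definition gt_k :: "nat \<Rightarrow> nat list \<Rightarrow> ser" where
  "gt_k n lam = foldl (\<lambda>f i. D_op n i f) ser_one (res_word n lam)"

definition conj_part :: "nat list \<Rightarrow> nat \<Rightarrow> nat" where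
  "conj_part lam i = length (filter (\<lambda>x. i \<le> x) lam)"

definition diag :: "nat list \<Rightarrow> nat set" where
  "diag lam = {i. 1 \<le> i \<and> i \<le> length lam \<and> i \<le> lam ! (i - 1)}"

definition diag_factor :: "nat \<Rightarrow> nat list \<Rightarrow> coef" where
  "diag_factor n lam = (\<Prod>i\<in>diag lam.
      eA n (aidx n (int (lam ! (i - 1)) - int i + 1)) / eA n (aidx n (int i - int (conj_part lam i))))"

definition rat_eval1 :: "coef fps \<Rightarrow> coef" where
  "rat_eval1 F = (THE v. \<exists>p q. poly q 1 \<noteq> 0 \<and> fps_of_poly q * F = fps_of_poly p
                              \<and> v = poly p 1 / poly q 1)"

definition shift_mon :: "(nat \<Rightarrow>\<^sub>0 nat) \<Rightarrow> (nat \<Rightarrow>\<^sub>0 nat)" where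
  "shift_mon m = (\<Sum>j\<in>Poly_Mapping.keys m. Poly_Mapping.single (Suc j) (Poly_Mapping.lookup m j))"

text \<open>Coefficient of y^m in f(1,y_1,y_2,...): the new first variable z gets
substituted by 1 in the series sum_k [z^k y'^m] f z^k (y' = shifted variables).\<close>
definition sigma_op :: "ser \<Rightarrow> ser" where
  "sigma_op f m = rat_eval1 (Abs_fps (\<lambda>k. f (Poly_Mapping.single 0 k + shift_mon m)))"

end

theory Submission
  imports Defs
begin

definition invol :: "nat \<Rightarrow> (nat \<Rightarrow> nat) \<Rightarrow> bool" where
  "invol n w \<longleftrightarrow> (\<forall>k. w (w k) = k) \<and> (\<forall>k. (1 \<le> w k \<and> w k \<le> n) = (1 \<le> k \<and> k \<le> n))"

lemma lookup_perm_expo: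
  assumes iv: "invol n w" and n1: "1 \<le> n"
  shows "Poly_Mapping.lookup (perm_expo n w c) k =
    (if 1 \<le> k \<and> k < n then (if w k < n then Poly_Mapping.lookup c (w k) else 0)
        - (if w n < n then Poly_Mapping.lookup c (w n) else 0)
     else Poly_Mapping.lookup c k)"
proof -
  have inv: "\<And>i m. (w i = m) = (i = w m)" using iv unfolding invol_def by metis
  have rng: "\<And>k. (1 \<le> w k \<and> w k \<le> n) = (1 \<le> k \<and> k \<le> n)" using iv unfolding invol_def by blast
  have e1: "Poly_Mapping.lookup (\<Sum>i\<in>{1..<n}. Poly_Mapping.single i (Poly_Mapping.lookup c i)) k
      = (if 1 \<le> k \<and> k < n then Poly_Mapping.lookup c k else 0)"
    by (simp add: lookup_sum lookup_single when_def)
  have e2: "Poly_Mapping.lookup (\<Sum>i\<in>{1..<n}. (if w i = n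
            then (\<Sum>j\<in>{1..<n}. Poly_Mapping.single j (- Poly_Mapping.lookup c i))
            else Poly_Mapping.single (w i) (Poly_Mapping.lookup c i))) k
     = (\<Sum>i\<in>{1..<n}. (if i = w n then (if 1 \<le> k \<and> k < n then - Poly_Mapping.lookup c i else 0) else 0))
       + (\<Sum>i\<in>{1..<n}. (if i = w k \<and> k \<noteq> n then Poly_Mapping.lookup c i else 0))"
    unfolding lookup_sum sum.distrib[symmetric]
  proof (rule sum.cong[OF refl])
    fix i
    show "Poly_Mapping.lookup (if w i = n
            then (\<Sum>j\<in>{1..<n}. Poly_Mapping.single j (- Poly_Mapping.lookup c i))
            else Poly_Mapping.single (w i) (Poly_Mapping.lookup c i)) k
      = (if i = w n then (if 1 \<le> k \<and> k < n then - Poly_Mapping.lookup c i else 0) else 0)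
       + (if i = w k \<and> k \<noteq> n then Poly_Mapping.lookup c i else 0)"
    proof (cases "w i = n")
      case True
      then have "i = w n" using inv by blast
      moreover have "i = w k \<Longrightarrow> k = n" using True inv by blast
      ultimately show ?thesis using True by (auto simp: lookup_sum lookup_single when_def)
    next
      case False
      then have "i \<noteq> w n" using inv by blast
      moreover have "(i = w k \<and> k \<noteq> n) = (w i = k)" using False inv by blast
      ultimately show ?thesis using False by (auto simp: lookup_single when_def)
    qed
  qed
  have e3: "(\<Sum>i\<in>{1..<n}. (if i = w n then (if 1 \<le> k \<and> k < n then - Poly_Mapping.lookup c i else 0) else 0))
     = (if 1 \<le> k \<and> k < n \<and> w n < n then - Poly_Mapping.lookup c (w n) else 0)"
    using rng[of n] n1 by (auto simp: if_distrib cong: if_cong)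
  have e4: "(\<Sum>i\<in>{1..<n}. (if i = w k \<and> k \<noteq> n then Poly_Mapping.lookup c i else 0))
     = (if 1 \<le> k \<and> k < n \<and> w k < n then Poly_Mapping.lookup c (w k) else 0)"
  proof (cases "1 \<le> k \<and> k < n")
    case True then show ?thesis using rng[of k] by (auto simp: sum.delta')
  next
    case False
    have "\<not> (1 \<le> w k \<and> w k < n \<and> k \<noteq> n)" using False rng[of k] by auto
    then show ?thesis using False by (auto intro!: sum.neutral)
  qed
  show ?thesis
    unfolding perm_expo_def lookup_add lookup_minus e1 e2 e3 e4 by auto
qed

lemma perm_expo_add:
  assumes "invol n w" "1 \<le> n"
  shows "perm_expo n w (a + b) = perm_expo n w a + perm_expo n w b"
  by (rule poly_mapping_eqI) (simp add: lookup_perm_expo[OF assms] lookup_add)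

lemma perm_expo_invol:
  assumes iv: "invol n w" and n1: "1 \<le> n"
  shows "perm_expo n w (perm_expo n w c) = c"
proof (rule poly_mapping_eqI)
  fix k
  have ww: "\<And>k. w (w k) = k" using iv unfolding invol_def by blast
  have rng: "\<And>k. (1 \<le> w k \<and> w k \<le> n) = (1 \<le> k \<and> k \<le> n)" using iv unfolding invol_def by blast
  define d where "d = perm_expo n w c"
  have L: "\<And>c k. Poly_Mapping.lookup (perm_expo n w c) k =
    (if 1 \<le> k \<and> k < n then (if w k < n then Poly_Mapping.lookup c (w k) else 0)
        - (if w n < n then Poly_Mapping.lookup c (w n) else 0)
     else Poly_Mapping.lookup c k)" by (rule lookup_perm_expo[OF iv n1])
  show "Poly_Mapping.lookup (perm_expo n w d) k = Poly_Mapping.lookup c k"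
  proof (cases "1 \<le> k \<and> k < n")
    case False
    have "Poly_Mapping.lookup (perm_expo n w d) k = Poly_Mapping.lookup d k" unfolding L[of d k] if_not_P[OF False] ..
    also have "\<dots> = Poly_Mapping.lookup c k" unfolding d_def L[of c k] if_not_P[OF False] ..
    finally show ?thesis .
  next
    case True
    show ?thesis
    proof (cases "w n < n")
      case False
      then have "w n = n" using rng[of n] n1 by auto
      then have "w k < n" using True rng[of k] ww by (metis le_neq_implies_less less_imp_le)
      then have "1 \<le> w k" using rng[of k] True by auto
      have "Poly_Mapping.lookup d (w k) = Poly_Mapping.lookup c k"
        unfolding d_def L[of c "w k"] using \<open>w k < n\<close> \<open>1 \<le> w k\<close> ww False True by simp
      then show ?thesis unfolding L[of d] using True \<open>w k < n\<close> False by simp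
    next
      case wn: True
      have wn1: "1 \<le> w n" using rng[of n] n1 by auto
      have wwn: "w (w n) = n" using ww by blast
      have dn: "Poly_Mapping.lookup d (w n) = - Poly_Mapping.lookup c (w n)"
        unfolding d_def L[of c "w n"] using wn wn1 wwn by simp
      show ?thesis
      proof (cases "k = w n")
        case True
        then have "\<not> w k < n" using wwn by simp
        then show ?thesis unfolding L[of d] using True wn dn \<open>1 \<le> k \<and> k < n\<close> by simp
      next
        case False
        then have "w k \<noteq> n" using ww by metis
        then have wk: "w k < n" "1 \<le> w k" using rng[of k] True by auto
        have dk: "Poly_Mapping.lookup d (w k) = Poly_Mapping.lookup c k - Poly_Mapping.lookup c (w n)"
          unfolding d_def L[of c "w k"] using wk ww wn \<open>1 \<le> k \<and> k < n\<close> by simp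
        show ?thesis unfolding L[of d] using True wn dn dk wk by simp
      qed
    qed
  qed
qed

lemma lookup_expo:
  "Poly_Mapping.lookup (expo n j) k =
     (if j = n then (if 1 \<le> k \<and> k < n then -1 else 0) else (if k = j then 1 else 0))"
  by (simp add: expo_def lookup_sum lookup_single when_def)

lemma perm_expo_expo:
  assumes iv: "invol n w" and n1: "1 \<le> n" and j: "1 \<le> j" "j \<le> n"
  shows "perm_expo n w (expo n j) = expo n (w j)"
proof (rule poly_mapping_eqI)
  fix k
  have ww: "\<And>k. w (w k) = k" using iv unfolding invol_def by blast
  have rng: "\<And>k. (1 \<le> w k \<and> w k \<le> n) = (1 \<le> k \<and> k \<le> n)" using iv unfolding invol_def by blast
  have wj: "1 \<le> w j" "w j \<le> n" using rng[of j] j by auto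
  have wn: "1 \<le> w n" "w n \<le> n" using rng[of n] n1 by auto
  have L: "\<And>c k. Poly_Mapping.lookup (perm_expo n w c) k =
    (if 1 \<le> k \<and> k < n then (if w k < n then Poly_Mapping.lookup c (w k) else 0)
        - (if w n < n then Poly_Mapping.lookup c (w n) else 0)
     else Poly_Mapping.lookup c k)" by (rule lookup_perm_expo[OF iv n1])
  show "Poly_Mapping.lookup (perm_expo n w (expo n j)) k = Poly_Mapping.lookup (expo n (w j)) k"
  proof (cases "1 \<le> k \<and> k < n")
    case False
    have a: "k = j \<Longrightarrow> j = n" using False j by linarith
    have b: "k = w j \<Longrightarrow> w j = n" using False wj by linarith
    have c: "\<not> (1 \<le> k \<and> k < n)" using False by simp
    have "Poly_Mapping.lookup (perm_expo n w (expo n j)) k = Poly_Mapping.lookup (expo n j) k"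
      unfolding L[of _ k] if_not_P[OF False] ..
    also have "\<dots> = 0" unfolding lookup_expo if_not_P[OF False] using a by simp
    also have "\<dots> = Poly_Mapping.lookup (expo n (w j)) k" unfolding lookup_expo if_not_P[OF False] using b by simp
    finally show ?thesis .
  next
    case kk: True
    have wk: "1 \<le> w k" "w k \<le> n" using rng[of k] kk by auto
    show ?thesis
    proof (cases "j = n")
      case jn: True
      show ?thesis
      proof (cases "w n = n")
        case True
        have "(w k = n) = (k = w n)" using ww by metis
        then have "w k \<noteq> n" using True kk by simp
        then have "w k < n" using wk by auto
        then show ?thesis unfolding L[of _ k] lookup_expo using jn True kk wk by simp
      next
        case False
        then have wnl: "w n < n" using wn by auto
        show ?thesis
        proof (cases "k = w n")
          case True
          then have "\<not> w k < n" using ww by simp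
          then show ?thesis unfolding L[of _ k] lookup_expo using jn wnl True kk wn by simp
        next
          case False
          then have "w k \<noteq> n" using ww by metis
          then have "w k < n" using wk by auto
          then show ?thesis unfolding L[of _ k] lookup_expo using jn wnl False kk wk wn \<open>w n \<noteq> n\<close> by simp
        qed
      qed
    next
      case jn: False
      then have jl: "j < n" using j by auto
      show ?thesis
      proof (cases "w j = n")
        case True
        then have wnj: "w n = j" using ww by metis
        have "(w k = j) = (k = w j)" using ww by metis
        then have "w k \<noteq> j" using True kk by simp
        then show ?thesis unfolding L[of _ k] lookup_expo using jn jl True wnj kk j by simp
      next
        case False
        then have "w n \<noteq> j" using ww by metis
        have "(w k = j) = (k = w j)" using ww by metis
        then show ?thesis unfolding L[of _ k] lookup_expo using jn jl False \<open>w n \<noteq> j\<close> kk wj wk by auto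
      qed
    qed
  qed
qed

abbreviation FR :: "lpoly \<Rightarrow> lpoly \<Rightarrow> coef" where "FR \<equiv> Fraction_Field.Fract"

lemma perm_expo_zero: assumes "invol n w" "1 \<le> n" shows "perm_expo n w 0 = 0"
  using perm_expo_add[OF assms, of 0 0] by simp

lemma lpoly_perm_frag_of: "lpoly_perm n w (frag_of c) = frag_of (perm_expo n w c)"
  by (simp add: lpoly_perm_def)

lemma lpoly_perm_diff: "lpoly_perm n w (a - b) = lpoly_perm n w a - lpoly_perm n w b"
  by (simp add: lpoly_perm_def frag_extend_diff)

lemma lpoly_perm_add: "lpoly_perm n w (a + b) = lpoly_perm n w a + lpoly_perm n w b"
  by (simp add: lpoly_perm_def frag_extend_add)

lemma lpoly_perm_zero: "lpoly_perm n w 0 = 0"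
  by (simp add: lpoly_perm_def)

lemma lpoly_perm_one: assumes "invol n w" "1 \<le> n" shows "lpoly_perm n w 1 = 1"
proof -
  have one: "(1::lpoly) = frag_of 0" by simp
  have "lpoly_perm n w (frag_of 0) = frag_of (perm_expo n w 0)" by (rule lpoly_perm_frag_of)
  then show ?thesis unfolding perm_expo_zero[OF assms] one[symmetric] .
qed

lemma lpoly_perm_mult:
  assumes iv: "invol n w" and n1: "1 \<le> n"
  shows "lpoly_perm n w (a * b) = lpoly_perm n w a * lpoly_perm n w b"
proof -
  have h: "lpoly_perm n w (frag_of x * b) = lpoly_perm n w (frag_of x) * lpoly_perm n w b" for x
    using subset_UNIV
  proof (induction b rule: frag_induction)
    case zero then show ?case by (simp add: lpoly_perm_zero)
  next
    case (one y) then show ?case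
      by (simp add: mult_single lpoly_perm_frag_of perm_expo_add[OF iv n1])
  next
    case (diff a b) then show ?case by (simp add: right_diff_distrib lpoly_perm_diff)
  qed
  show ?thesis
    using subset_UNIV
  proof (induction a rule: frag_induction)
    case zero then show ?case by (simp add: lpoly_perm_zero)
  next
    case (one x) show ?case by (rule h)
  next
    case (diff a c) then show ?case by (simp add: left_diff_distrib lpoly_perm_diff)
  qed
qed

lemma lpoly_perm_invol:
  assumes iv: "invol n w" and n1: "1 \<le> n"
  shows "lpoly_perm n w (lpoly_perm n w a) = a"
  using subset_UNIV
proof (induction a rule: frag_induction)
  case zero then show ?case by (simp add: lpoly_perm_zero)
next
  case (one x) then show ?case by (simp add: lpoly_perm_frag_of perm_expo_invol[OF iv n1])
next
  case (diff a c) then show ?case by (simp add: lpoly_perm_diff)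
qed

lemma lpoly_perm_eq0:
  assumes iv: "invol n w" and n1: "1 \<le> n"
  shows "(lpoly_perm n w a = 0) = (a = 0)"
  by (metis lpoly_perm_invol[OF iv n1] lpoly_perm_zero)

lemma coef_perm_Fract:
  assumes iv: "invol n w" and n1: "1 \<le> n" and b: "b \<noteq> 0"
  shows "coef_perm n w (FR a b) = FR (lpoly_perm n w a) (lpoly_perm n w b)"
proof -
  define pq where "pq = (SOME pq. snd pq \<noteq> 0 \<and> FR a b = FR (fst pq) (snd pq))"
  have ex: "\<exists>pq. snd pq \<noteq> 0 \<and> FR a b = FR (fst pq) (snd pq)"
    using b by (intro exI[of _ "(a, b)"]) simp
  have pq: "snd pq \<noteq> 0 \<and> FR a b = FR (fst pq) (snd pq)"
    unfolding pq_def by (rule someI_ex[OF ex])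
  then have e: "a * snd pq = fst pq * b" using b eq_fract(1) by blast
  have "lpoly_perm n w a * lpoly_perm n w (snd pq) = lpoly_perm n w (fst pq) * lpoly_perm n w b"
    using e lpoly_perm_mult[OF iv n1] by metis
  moreover have "lpoly_perm n w b \<noteq> 0" "lpoly_perm n w (snd pq) \<noteq> 0"
    using b pq lpoly_perm_eq0[OF iv n1] by auto
  ultimately have "FR (lpoly_perm n w (fst pq)) (lpoly_perm n w (snd pq))
      = FR (lpoly_perm n w a) (lpoly_perm n w b)"
    by (simp add: eq_fract(1))
  then show ?thesis unfolding coef_perm_def pq_def[symmetric] Let_def by simp
qed

locale fhom =
  fixes \<phi> :: "'a::field \<Rightarrow> 'a"
  assumes hadd: "\<phi> (x + y) = \<phi> x + \<phi> y"
    and hmult: "\<phi> (x * y) = \<phi> x * \<phi> y"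
    and hone: "\<phi> 1 = 1"
begin

lemma hzero: "\<phi> 0 = 0"
proof -
  have "\<phi> 0 + \<phi> 0 = \<phi> 0 + 0" using hadd[of 0 0] by simp
  then show ?thesis by (simp only: add_left_cancel)
qed

lemma hminus: "\<phi> (- x) = - \<phi> x"
  using hadd[of x "- x"] hzero minus_unique[of "\<phi> x" "\<phi> (- x)"] by simp

lemma hdiff: "\<phi> (x - y) = \<phi> x - \<phi> y"
  using hadd[of x "- y"] hminus by simp

lemma hinverse: "\<phi> (inverse x) = inverse (\<phi> x)"
proof (cases "x = 0")
  case True then show ?thesis by (simp add: hzero)
next
  case False
  then have "\<phi> x * \<phi> (inverse x) = 1" using hmult[of x "inverse x"] hone by simp
  then show ?thesis by (metis inverse_unique)
qed

lemma hdivide: "\<phi> (x / y) = \<phi> x / \<phi> y"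
  by (simp add: divide_inverse hmult hinverse)

lemma hsum: "\<phi> (sum f A) = sum (\<lambda>i. \<phi> (f i)) A"
  by (induction A rule: infinite_finite_induct) (auto simp: hzero hadd)

lemma hprod: "\<phi> (prod f A) = prod (\<lambda>i. \<phi> (f i)) A"
  by (induction A rule: infinite_finite_induct) (auto simp: hone hmult)

lemma hpower: "\<phi> (x ^ k) = \<phi> x ^ k"
  by (induction k) (auto simp: hone hmult)

lemma hnz: "(\<phi> x = 0) = (x = 0)"
proof
  assume "\<phi> x = 0"
  show "x = 0"
  proof (rule ccontr)
    assume "x \<noteq> 0"
    then have "\<phi> x * \<phi> (inverse x) = 1" using hmult[of x "inverse x"] hone by simp
    with \<open>\<phi> x = 0\<close> show False by simp
  qed
qed (simp add: hzero)

lemma hpower_int: "\<phi> (power_int x k) = power_int (\<phi> x) k"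
  by (cases "k \<ge> 0") (auto simp: power_int_def hpower hinverse)

end

lemma coef_perm_fhom:
  assumes iv: "invol n w" and n1: "1 \<le> n"
  shows "fhom (coef_perm n w)"
proof
  fix x y :: coef
  show "coef_perm n w (x + y) = coef_perm n w x + coef_perm n w y"
    by (cases x, cases y) (simp add: coef_perm_Fract[OF iv n1] lpoly_perm_add lpoly_perm_mult[OF iv n1] lpoly_perm_eq0[OF iv n1])
  show "coef_perm n w (x * y) = coef_perm n w x * coef_perm n w y"
    by (cases x, cases y) (simp add: coef_perm_Fract[OF iv n1] lpoly_perm_add lpoly_perm_mult[OF iv n1] lpoly_perm_eq0[OF iv n1])
  show "coef_perm n w 1 = 1"
    unfolding One_fract_def by (simp add: coef_perm_Fract[OF iv n1] lpoly_perm_one[OF iv n1])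
qed

lemma coef_perm_eA:
  assumes iv: "invol n w" and n1: "1 \<le> n" and j: "1 \<le> j" "j \<le> n"
  shows "coef_perm n w (eA n j) = eA n (w j)"
  unfolding eA_def
  by (simp add: coef_perm_Fract[OF iv n1] lpoly_perm_one[OF iv n1] lpoly_perm_frag_of perm_expo_expo[OF iv n1 j])

lemma eA_nz: "eA n j \<noteq> 0"
  by (simp add: eA_def eq_fract Zero_fract_def)

lemma frag_of_inj: "(frag_of a = frag_of b) = (a = b)"
  by (metis lookup_single_eq lookup_single_not_eq zero_neq_one)

lemma eA_eq_iff: "(eA n i = eA n j) = (expo n i = expo n j)"
  by (simp add: eA_def eq_fract frag_of_inj)

lemma transp_invol:
  assumes "1 \<le> a" "a \<le> n" "1 \<le> b" "b \<le> n"
  shows "invol n (transp_fn a b)"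
  using assms unfolding invol_def transp_fn_def by auto

definition ratv :: "coef fps \<Rightarrow> coef \<Rightarrow> bool" where
  "ratv F v \<longleftrightarrow> (\<exists>p q. poly q 1 \<noteq> 0 \<and> fps_of_poly q * F = fps_of_poly p \<and> v = poly p 1 / poly q 1)"

lemma ratv_cong: "ratv F v \<Longrightarrow> F = G \<Longrightarrow> v = w \<Longrightarrow> ratv G w"
  by simp

lemma ratv_unique:
  assumes "ratv F v" "ratv F v'" shows "v = v'"
proof -
  obtain p q where pq: "poly q 1 \<noteq> 0" "fps_of_poly q * F = fps_of_poly p" "v = poly p 1 / poly q 1"
    using assms(1) unfolding ratv_def by blast
  obtain p' q' where pq': "poly q' 1 \<noteq> 0" "fps_of_poly q' * F = fps_of_poly p'" "v' = poly p' 1 / poly q' 1"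
    using assms(2) unfolding ratv_def by blast
  have "fps_of_poly (q' * p) = fps_of_poly (q * p')"
    unfolding fps_of_poly_mult pq(2)[symmetric] pq'(2)[symmetric] by (simp add: algebra_simps)
  then have "q' * p = q * p'" by (simp only: fps_of_poly_eq_iff)
  then have "poly q' 1 * poly p 1 = poly q 1 * poly p' 1" by (metis poly_mult)
  then have "poly p 1 / poly q 1 = poly p' 1 / poly q' 1" using pq(1) pq'(1)
    by (simp add: frac_eq_eq mult.commute)
  then show ?thesis using pq(3) pq'(3) by simp
qed

lemma ratv_eval: "ratv F v \<Longrightarrow> rat_eval1 F = v"
  unfolding rat_eval1_def
  apply (rule the_equality)
   apply (simp add: ratv_def[symmetric])
  using ratv_unique unfolding ratv_def by blast

lemma ratv_poly: "ratv (fps_of_poly p) (poly p 1)"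
  unfolding ratv_def by (intro exI[of _ p] exI[of _ 1]) simp

lemma ratv_const: "ratv (fps_const c) c"
  using ratv_poly[of "[:c:]"] by (simp add: fps_of_poly_const)

lemma ratv_zero: "ratv 0 0"
  using ratv_poly[of 0] by simp

lemma ratv_add:
  assumes "ratv F v" "ratv G w" shows "ratv (F + G) (v + w)"
proof -
  obtain p q where pq: "poly q 1 \<noteq> 0" "fps_of_poly q * F = fps_of_poly p" "v = poly p 1 / poly q 1"
    using assms(1) unfolding ratv_def by blast
  obtain p' q' where pq': "poly q' 1 \<noteq> 0" "fps_of_poly q' * G = fps_of_poly p'" "w = poly p' 1 / poly q' 1"
    using assms(2) unfolding ratv_def by blast
  have "fps_of_poly (q * q') * (F + G) = fps_of_poly (p * q' + p' * q)"
    unfolding fps_of_poly_mult fps_of_poly_add pq(2)[symmetric] pq'(2)[symmetric] by (simp add: algebra_simps)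
  moreover have "poly (q * q') 1 \<noteq> 0" using pq(1) pq'(1) by simp
  moreover have "v + w = poly (p * q' + p' * q) 1 / poly (q * q') 1"
    unfolding pq(3) pq'(3) using pq(1) pq'(1) by (simp add: add_frac_eq)
  ultimately show ?thesis unfolding ratv_def by blast
qed

lemma ratv_mult:
  assumes "ratv F v" "ratv G w" shows "ratv (F * G) (v * w)"
proof -
  obtain p q where pq: "poly q 1 \<noteq> 0" "fps_of_poly q * F = fps_of_poly p" "v = poly p 1 / poly q 1"
    using assms(1) unfolding ratv_def by blast
  obtain p' q' where pq': "poly q' 1 \<noteq> 0" "fps_of_poly q' * G = fps_of_poly p'" "w = poly p' 1 / poly q' 1"
    using assms(2) unfolding ratv_def by blast
  have "fps_of_poly (q * q') * (F * G) = fps_of_poly (p * p')"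
    unfolding fps_of_poly_mult pq(2)[symmetric] pq'(2)[symmetric] by (simp add: algebra_simps)
  moreover have "poly (q * q') 1 \<noteq> 0" using pq(1) pq'(1) by simp
  moreover have "v * w = poly (p * p') 1 / poly (q * q') 1"
    unfolding pq(3) pq'(3) by simp
  ultimately show ?thesis unfolding ratv_def by blast
qed

lemma ratv_cmult: "ratv F v \<Longrightarrow> ratv (fps_const c * F) (c * v)"
  using ratv_mult[OF ratv_const] by blast

lemma ratv_minus: "ratv F v \<Longrightarrow> ratv (- F) (- v)"
proof -
  assume a: "ratv F v"
  have e: "fps_const (-1) * F = - F" by (rule fps_ext) simp
  from ratv_cmult[OF a, of "-1"] show ?thesis unfolding e by simp
qed

lemma ratv_diff: "ratv F v \<Longrightarrow> ratv G w \<Longrightarrow> ratv (F - G) (v - w)"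
proof -
  assume a: "ratv F v" and b: "ratv G w"
  have "ratv (F + - G) (v + - w)" by (rule ratv_add[OF a ratv_minus[OF b]])
  then show ?thesis by simp
qed

lemma ratv_sum:
  assumes "\<And>x. x \<in> A \<Longrightarrow> ratv (F x) (v x)"
  shows "ratv (sum F A) (sum v A)"
  using assms
proof (induction A rule: infinite_finite_induct)
  case (infinite A) then show ?case by (simp add: ratv_zero)
next
  case empty then show ?case by (simp add: ratv_zero)
next
  case (insert x F) then show ?case by (simp add: ratv_add)
qed


lemma ratv_geom:
  assumes "b \<noteq> 1"
  shows "ratv (Abs_fps (\<lambda>k. b ^ k)) (1 / (1 - b))"
proof -
  have "fps_of_poly [:1, - b:] * Abs_fps (\<lambda>k. b ^ k) = fps_of_poly 1"
  proof (rule fps_ext)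
    fix k
    show "fps_nth (fps_of_poly [:1, - b:] * Abs_fps (\<lambda>k. b ^ k)) k = fps_nth (fps_of_poly 1) k"
    proof (cases k)
      case 0 then show ?thesis by (simp add: fps_mult_nth)
    next
      case (Suc j)
      have "fps_nth (fps_of_poly [:1, - b:] * Abs_fps (\<lambda>k. b ^ k)) k
          = (\<Sum>i=0..Suc j. coeff [:1, - b:] i * b ^ (Suc j - i))"
        unfolding fps_mult_nth Suc by simp
      also have "\<dots> = (\<Sum>i\<in>{0,1}. coeff [:1, - b:] i * b ^ (Suc j - i))"
        by (rule sum.mono_neutral_right) (auto simp: coeff_pCons split: nat.splits)
      also have "\<dots> = 0" by simp
      finally show ?thesis using Suc by simp
    qed
  qed
  moreover have pb: "poly [:1, - b:] 1 = 1 - b" by simp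
  moreover have "1 - b \<noteq> 0" using assms by simp
  ultimately have "ratv (Abs_fps (\<lambda>k. b ^ k)) (poly 1 1 / poly [:1, - b:] 1)"
    unfolding ratv_def by (metis)
  then show ?thesis unfolding pb by simp
qed

definition fmap :: "(coef \<Rightarrow> coef) \<Rightarrow> coef fps \<Rightarrow> coef fps" where
  "fmap \<phi> F = Abs_fps (\<lambda>k. \<phi> (fps_nth F k))"

lemma (in fhom) poly_map: "poly (map_poly \<phi> p) 1 = \<phi> (poly p 1)"
  by (induction p) (simp_all add: map_poly_pCons hzero hadd hmult hone)

lemma ratv_fmap:
  assumes h: "fhom \<phi>" and r: "ratv F v"
  shows "ratv (fmap \<phi> F) (\<phi> v)"
proof -
  interpret fhom \<phi> by (rule h)
  obtain p q where pq: "poly q 1 \<noteq> 0" "fps_of_poly q * F = fps_of_poly p" "v = poly p 1 / poly q 1"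
    using r unfolding ratv_def by blast
  have "fps_of_poly (map_poly \<phi> q) * fmap \<phi> F = fmap \<phi> (fps_of_poly q * F)"
    by (rule fps_ext) (simp add: fmap_def fps_mult_nth coeff_map_poly hzero hsum hmult)
  also have "\<dots> = fps_of_poly (map_poly \<phi> p)"
    unfolding pq(2) by (rule fps_ext) (simp add: fmap_def coeff_map_poly hzero)
  finally have "fps_of_poly (map_poly \<phi> q) * fmap \<phi> F = fps_of_poly (map_poly \<phi> p)" .
  moreover have "poly (map_poly \<phi> q) 1 \<noteq> 0" using pq(1) by (simp add: poly_map hnz)
  moreover have "\<phi> v = poly (map_poly \<phi> p) 1 / poly (map_poly \<phi> q) 1"
    using pq(3) by (simp add: poly_map hdivide)
  ultimately show ?thesis unfolding ratv_def by blast
qed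

abbreviation LK where "LK \<equiv> Poly_Mapping.lookup"
abbreviation SG where "SG \<equiv> Poly_Mapping.single"

lemma lookup_shift: "LK (shift_mon m) j = (if j = 0 then 0 else LK m (j - 1))"
proof (cases j)
  case 0 then show ?thesis by (simp add: shift_mon_def lookup_sum lookup_single when_def)
next
  case (Suc i)
  have "LK (shift_mon m) j = (\<Sum>x\<in>Poly_Mapping.keys m. if x = i then LK m x else 0)"
    by (simp add: shift_mon_def lookup_sum lookup_single when_def Suc)
  also have "\<dots> = LK m i" by (simp add: in_keys_iff)
  finally show ?thesis using Suc by simp
qed

lemma shift_add: "shift_mon (a + b) = shift_mon a + shift_mon b"
  by (rule poly_mapping_eqI) (simp add: lookup_shift lookup_add)

lemma shift_zero: "shift_mon 0 = 0"
  by (rule poly_mapping_eqI) (simp add: lookup_shift)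

lemma shift_inj: "(shift_mon a = shift_mon b) = (a = b)"
proof
  assume h: "shift_mon a = shift_mon b"
  show "a = b"
  proof (rule poly_mapping_eqI)
    fix j
    have "LK (shift_mon a) (Suc j) = LK (shift_mon b) (Suc j)" using h by simp
    then show "LK a j = LK b j" by (simp add: lookup_shift)
  qed
qed simp

definition unshift :: "(nat \<Rightarrow>\<^sub>0 nat) \<Rightarrow> (nat \<Rightarrow>\<^sub>0 nat)" where
  "unshift p = Abs_poly_mapping (\<lambda>j. LK p (Suc j))"

lemma lookup_unshift: "LK (unshift p) j = LK p (Suc j)"
proof -
  have "{j. LK p (Suc j) \<noteq> 0} = Suc -` Poly_Mapping.keys p" by (auto simp: in_keys_iff)
  then have "finite {j. LK p (Suc j) \<noteq> 0}" by (simp add: finite_vimageI)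
  then show ?thesis unfolding unshift_def by simp
qed

lemma decomp: "p = SG 0 (LK p 0) + shift_mon (unshift p)"
  by (rule poly_mapping_eqI) (simp add: lookup_add lookup_single when_def lookup_shift lookup_unshift)

lemma unshift_X: "unshift (SG 0 k + shift_mon m) = m"
  by (rule poly_mapping_eqI) (simp add: lookup_add lookup_single when_def lookup_shift lookup_unshift)

lemma unshift_add: "unshift (a + b) = unshift a + unshift b"
  by (rule poly_mapping_eqI) (simp add: lookup_add lookup_unshift)

lemma lookup0_X: "LK (SG 0 k + shift_mon m) 0 = k"
  by (simp add: lookup_add lookup_shift)

definition phi :: "ser \<Rightarrow> (nat \<Rightarrow>\<^sub>0 nat) \<Rightarrow> coef fps" where
  "phi f m = Abs_fps (\<lambda>k. f (SG 0 k + shift_mon m))"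

definition good :: "ser \<Rightarrow> ser \<Rightarrow> bool" where
  "good f h \<longleftrightarrow> (\<forall>m. ratv (phi f m) (h m))"

lemma good_sigma: "good f h \<Longrightarrow> sigma_op f = h"
  unfolding good_def
  by (rule ext) (simp add: sigma_op_def phi_def[symmetric] ratv_eval)

lemma good_cong: "good f h \<Longrightarrow> f = f' \<Longrightarrow> h = h' \<Longrightarrow> good f' h'"
  by simp

lemma good_one: "good ser_one ser_one"
  unfolding good_def
proof
  fix m
  have "phi ser_one m = fps_const (ser_one m)"
  proof (rule fps_ext)
    fix k
    have "(SG 0 k + shift_mon m = 0) = (k = 0 \<and> m = 0)"
    proof
      assume h: "SG 0 k + shift_mon m = 0"
      then have "k = 0" using lookup0_X[of k m] by simp
      moreover from h have "m = 0" using unshift_X[of k m] by (metis add_0 lookup0_X shift_inj shift_zero single_zero)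
      ultimately show "k = 0 \<and> m = 0" by simp
    qed (simp add: shift_zero)
    then show "fps_nth (phi ser_one m) k = fps_nth (fps_const (ser_one m)) k"
      by (simp add: phi_def ser_one_def)
  qed
  then show "ratv (phi ser_one m) (ser_one m)" by (simp add: ratv_const)
qed

lemma good_lin:
  assumes "good f h" "good g H"
  shows "good (\<lambda>m. (g m - f m) / d) (\<lambda>m. (H m - h m) / d)"
  unfolding good_def
proof
  fix m
  have "ratv (fps_const (1/d) * (phi g m - phi f m)) ((1/d) * (H m - h m))"
    using assms unfolding good_def by (intro ratv_cmult ratv_diff) auto
  then show "ratv (phi (\<lambda>m. (g m - f m) / d) m) ((H m - h m) / d)"
    by (rule ratv_cong) (auto intro!: fps_ext simp: phi_def)
qed

lemma good_add:
  assumes "good f h" "good g H"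
  shows "good (\<lambda>m. g m + f m) (\<lambda>m. H m + h m)"
  unfolding good_def
proof
  fix m
  have "ratv (phi g m + phi f m) (H m + h m)"
    using assms unfolding good_def by (intro ratv_add) auto
  then show "ratv (phi (\<lambda>m. g m + f m) m) (H m + h m)"
    by (rule ratv_cong) (auto intro!: fps_ext simp: phi_def)
qed

lemma good_map:
  assumes "fhom \<phi>" "good f h"
  shows "good (\<lambda>m. \<phi> (f m)) (\<lambda>m. \<phi> (h m))"
  unfolding good_def
proof
  fix m
  have "ratv (fmap \<phi> (phi f m)) (\<phi> (h m))"
    using assms unfolding good_def by (intro ratv_fmap) auto
  then show "ratv (phi (\<lambda>m. \<phi> (f m)) m) (\<phi> (h m))"
    by (rule ratv_cong) (auto intro!: fps_ext simp: phi_def fmap_def)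
qed

lemma X_add: "i \<le> k \<Longrightarrow> (SG 0 i + shift_mon a) + (SG 0 (k - i) + shift_mon b) = SG 0 k + shift_mon (a + b)"
proof -
  assume "i \<le> k"
  then have e: "SG 0 i + SG 0 (k - i) = SG 0 k" by (simp add: single_add[symmetric])
  have "(SG 0 i + shift_mon a) + (SG 0 (k - i) + shift_mon b) = (SG 0 i + SG 0 (k - i)) + shift_mon (a + b)"
    by (simp add: shift_add ac_simps)
  then show ?thesis unfolding e .
qed

lemma phi_ser_mult:
  "phi (ser_mult A B) m = (\<Sum>x\<in>{p. fst p + snd p = m}. phi A (fst x) * phi B (snd x))"
proof (rule fps_ext)
  fix k
  define S where "S = {p::(nat \<Rightarrow>\<^sub>0 nat) \<times> (nat \<Rightarrow>\<^sub>0 nat). fst p + snd p = m}"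
  define X where "X = SG 0 k + shift_mon m"
  define P where "P = {p::(nat \<Rightarrow>\<^sub>0 nat) \<times> (nat \<Rightarrow>\<^sub>0 nat). fst p + snd p = X}"
  define g where "g = (\<lambda>(x::(nat \<Rightarrow>\<^sub>0 nat) \<times> (nat \<Rightarrow>\<^sub>0 nat), i::nat).
      (SG 0 i + shift_mon (fst x), SG 0 (k - i) + shift_mon (snd x)))"
  define g' where "g' = (\<lambda>p::(nat \<Rightarrow>\<^sub>0 nat) \<times> (nat \<Rightarrow>\<^sub>0 nat).
      ((unshift (fst p), unshift (snd p)), LK (fst p) 0))"
  have bij: "bij_betw g (S \<times> {0..k}) P"
  proof (rule bij_betw_byWitness[where f' = g'])
    show "\<forall>a\<in>S \<times> {0..k}. g' (g a) = a"
      by (auto simp: g_def g'_def unshift_X lookup0_X)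
    show "\<forall>a'\<in>P. g (g' a') = a'"
    proof
      fix p assume "p \<in> P"
      then have e: "fst p + snd p = X" by (simp add: P_def)
      then have "LK (fst p) 0 + LK (snd p) 0 = k"
        unfolding X_def by (metis lookup0_X lookup_add)
      then have "k - LK (fst p) 0 = LK (snd p) 0" by simp
      then show "g (g' p) = p"
        using decomp[of "fst p"] decomp[of "snd p"]
        by (simp add: g_def g'_def prod_eq_iff)
    qed
    show "g ` (S \<times> {0..k}) \<subseteq> P"
      by (auto simp: g_def S_def P_def X_def X_add)
    show "g' ` P \<subseteq> S \<times> {0..k}"
    proof
      fix y assume "y \<in> g' ` P"
      then obtain p where p: "p \<in> P" "y = g' p" by blast
      then have e: "fst p + snd p = X" by (simp add: P_def)
      then have "LK (fst p) 0 + LK (snd p) 0 = k"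
        unfolding X_def by (metis lookup0_X lookup_add)
      moreover have "unshift (fst p) + unshift (snd p) = m"
        using e unfolding X_def by (metis unshift_X unshift_add)
      ultimately show "y \<in> S \<times> {0..k}" using p by (auto simp: g'_def S_def)
    qed
  qed
  have "fps_nth (\<Sum>x\<in>S. phi A (fst x) * phi B (snd x)) k
      = (\<Sum>x\<in>S. \<Sum>i=0..k. A (SG 0 i + shift_mon (fst x)) * B (SG 0 (k - i) + shift_mon (snd x)))"
    unfolding fps_sum_nth fps_mult_nth phi_def by simp
  also have "\<dots> = (\<Sum>(x, i)\<in>S \<times> {0..k}. A (SG 0 i + shift_mon (fst x)) * B (SG 0 (k - i) + shift_mon (snd x)))"
    by (rule sum.cartesian_product)
  also have "\<dots> = (\<Sum>a\<in>S \<times> {0..k}. (\<lambda>p. A (fst p) * B (snd p)) (g a))"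
    by (rule sum.cong) (auto simp: g_def)
  also have "\<dots> = (\<Sum>p\<in>P. A (fst p) * B (snd p))"
    by (rule sum.reindex_bij_betw[OF bij])
  also have "\<dots> = fps_nth (phi (ser_mult A B) m) k"
    by (simp add: phi_def ser_mult_def P_def X_def)
  finally show "fps_nth (phi (ser_mult A B) m) k = fps_nth (\<Sum>x\<in>{p. fst p + snd p = m}. phi A (fst x) * phi B (snd x)) k"
    unfolding S_def by simp
qed

lemma good_mult:
  assumes "good A hA" "good B hB"
  shows "good (ser_mult A B) (ser_mult hA hB)"
  unfolding good_def
proof
  fix m
  have "ratv (\<Sum>x\<in>{p. fst p + snd p = m}. phi A (fst x) * phi B (snd x))
             (\<Sum>x\<in>{p. fst p + snd p = m}. hA (fst x) * hB (snd x))"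
    using assms unfolding good_def by (intro ratv_sum ratv_mult) auto
  then show "ratv (phi (ser_mult A B) m) (ser_mult hA hB m)"
    unfolding phi_ser_mult ser_mult_def .
qed

lemma tdeg_sup: "Poly_Mapping.keys m \<subseteq> A \<Longrightarrow> finite A \<Longrightarrow> tdeg m = sum (LK m) A"
  unfolding tdeg_def by (rule sum.mono_neutral_left) (auto simp: in_keys_iff)

lemma tdeg_X: "tdeg (SG 0 k + shift_mon m) = k + tdeg m"
proof -
  let ?X = "SG 0 k + shift_mon m"
  have "Poly_Mapping.keys ?X \<subseteq> insert 0 (Suc ` Poly_Mapping.keys m)"
  proof
    fix j assume "j \<in> Poly_Mapping.keys ?X"
    then have "LK ?X j \<noteq> 0" by (simp add: in_keys_iff)
    then show "j \<in> insert 0 (Suc ` Poly_Mapping.keys m)"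
      by (cases j) (auto simp: lookup_add lookup_single lookup_shift in_keys_iff)
  qed
  then have "tdeg ?X = sum (LK ?X) (insert 0 (Suc ` Poly_Mapping.keys m))"
    by (rule tdeg_sup) simp
  also have "\<dots> = LK ?X 0 + sum (LK ?X) (Suc ` Poly_Mapping.keys m)"
    by (rule sum.insert) auto
  also have "sum (LK ?X) (Suc ` Poly_Mapping.keys m) = sum (LK ?X \<circ> Suc) (Poly_Mapping.keys m)"
    by (rule sum.reindex) simp
  also have "\<dots> = tdeg m"
    unfolding tdeg_def by (rule sum.cong) (auto simp: lookup_add lookup_single lookup_shift)
  finally show ?thesis by (simp add: lookup0_X)
qed

lemma good_Omega:
  assumes "b \<noteq> 1"
  shows "good (Omega b) (\<lambda>m. b ^ tdeg m * (1 / (1 - b)))"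
  unfolding good_def
proof
  fix m
  have "ratv (fps_const (b ^ tdeg m) * Abs_fps (\<lambda>k. b ^ k)) (b ^ tdeg m * (1 / (1 - b)))"
    by (rule ratv_cmult[OF ratv_geom[OF assms]])
  moreover have "fps_const (b ^ tdeg m) * Abs_fps (\<lambda>k. b ^ k) = phi (Omega b) m"
    by (rule fps_ext) (simp add: phi_def Omega_def tdeg_X power_add)
  ultimately show "ratv (phi (Omega b) m) (b ^ tdeg m * (1 / (1 - b)))" by simp
qed

lemma sqf_X: "(\<forall>j. LK (SG 0 k + shift_mon m) j \<le> 1) = (k \<le> 1 \<and> (\<forall>j. LK m j \<le> 1))"
proof
  assume h: "\<forall>j. LK (SG 0 k + shift_mon m) j \<le> 1"
  have "k \<le> 1" using h[rule_format, of 0] by (simp add: lookup0_X)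
  moreover have "LK m j \<le> 1" for j using h[rule_format, of "Suc j"]
    by (simp add: lookup_add lookup_single lookup_shift)
  ultimately show "k \<le> 1 \<and> (\<forall>j. LK m j \<le> 1)" by blast
next
  assume h: "k \<le> 1 \<and> (\<forall>j. LK m j \<le> 1)"
  show "\<forall>j. LK (SG 0 k + shift_mon m) j \<le> 1"
  proof
    fix j show "LK (SG 0 k + shift_mon m) j \<le> 1"
      using h by (cases j) (auto simp: lookup_add lookup_single lookup_shift)
  qed
qed

lemma good_Omega_inv:
  "good (Omega_inv b) (\<lambda>m. (1 - b) * Omega_inv b m)"
  unfolding good_def
proof
  fix m
  define c where "c = Omega_inv b m"
  have "ratv (fps_of_poly [:c, - b * c:]) (poly [:c, - b * c:] 1)" by (rule ratv_poly)
  moreover have "fps_of_poly [:c, - b * c:] = phi (Omega_inv b) m"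
  proof (rule fps_ext)
    fix k
    show "fps_nth (fps_of_poly [:c, - b * c:]) k = fps_nth (phi (Omega_inv b) m) k"
      unfolding phi_def fps_nth_Abs_fps Omega_inv_def sqf_X c_def tdeg_X fps_of_poly_nth
      by (cases k; cases "k - 1") (auto simp: coeff_pCons Omega_inv_def)
  qed
  moreover have "poly [:c, - b * c:] 1 = (1 - b) * Omega_inv b m"
    by (simp add: c_def algebra_simps)
  ultimately show "ratv (phi (Omega_inv b) m) ((1 - b) * Omega_inv b m)" by simp
qed

lemma eA_ne:
  assumes "1 \<le> a" "a \<le> n" "1 \<le> b" "b \<le> n" "a \<noteq> b"
  shows "eA n a \<noteq> eA n b"
proof
  assume "eA n a = eA n b"
  then have e: "expo n a = expo n b" by (simp add: eA_eq_iff)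
  show False
  proof (cases "a = n")
    case True
    then have "b < n" using assms by auto
    have "LK (expo n a) b = LK (expo n b) b" using e by simp
    then show False using True \<open>b < n\<close> assms by (simp add: lookup_expo)
  next
    case False
    then have "a < n" using assms by auto
    have "LK (expo n a) a = LK (expo n b) a" using e by simp
    then show False using False \<open>a < n\<close> assms by (simp add: lookup_expo split: if_splits)
  qed
qed

lemma one_minus_bvar: "1 - bvar n i = inverse (eA n i)"
  by (simp add: bvar_def)

lemma bvar_ne1: "bvar n i \<noteq> 1"
  by (simp add: bvar_def eA_nz)

lemma eAlpha_ne1:
  assumes "2 \<le> n" "i < n"
  shows "1 - eAlpha n i \<noteq> 0"
proof (cases "i = 0")
  case True
  have "eA n n \<noteq> eA n 1" using assms by (intro eA_ne) auto
  then show ?thesis using True by (simp add: eAlpha_def eA_nz)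
next
  case False
  have "eA n i \<noteq> eA n (i + 1)" using assms False by (intro eA_ne) auto
  then show ?thesis using False by (simp add: eAlpha_def eA_nz)
qed

lemma ser_mult_scale_left: "ser_mult (\<lambda>m. c * A m) B = (\<lambda>m. c * ser_mult A B m)"
  by (rule ext) (simp add: ser_mult_def sum_distrib_left mult.assoc)

lemma ser_mult_scale_right: "ser_mult A (\<lambda>m. c * B m) = (\<lambda>m. c * ser_mult A B m)"
  by (rule ext) (simp add: ser_mult_def sum_distrib_left mult.left_commute)

lemma good_T_pos:
  assumes n: "2 \<le> n" and i: "1 \<le> i" "i < n" and g: "good f h"
  shows "good (T_op n i f) (T_op n i h)"
proof -
  have iv: "invol n (transp_fn i (i + 1))" using i by (intro transp_invol) auto
  have fh: "fhom (coef_perm n (transp_fn i (i + 1)))" using iv n by (intro coef_perm_fhom) auto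
  have "good (\<lambda>m. coef_perm n (transp_fn i (i + 1)) (f m)) (\<lambda>m. coef_perm n (transp_fn i (i + 1)) (h m))"
    by (rule good_map[OF fh g])
  from good_lin[OF g this, of "1 - eAlpha n i"] show ?thesis
    by (rule good_cong) (use i in \<open>auto simp: T_op_def s_op_def fun_eq_iff\<close>)
qed

lemma good_s0:
  assumes n: "2 \<le> n" and g: "good f h"
  shows "good (s_op n 0 f) (\<lambda>m. (eA n 1 / eA n n) * s_op n 0 h m)"
proof -
  have iv: "invol n (transp_fn 1 n)" using n by (intro transp_invol) auto
  have fh: "fhom (coef_perm n (transp_fn 1 n))" using iv n by (intro coef_perm_fhom) auto
  have g1: "good (Omega (bvar n 1)) (\<lambda>m. (1 / (1 - bvar n 1)) * Omega (bvar n 1) m)"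
    using good_Omega[OF bvar_ne1, of n 1] by (simp add: Omega_def mult.commute)
  have g2: "good (Omega_inv (bvar n n)) (\<lambda>m. (1 - bvar n n) * Omega_inv (bvar n n) m)"
    by (rule good_Omega_inv)
  have g3: "good (\<lambda>m. coef_perm n (transp_fn 1 n) (f m)) (\<lambda>m. coef_perm n (transp_fn 1 n) (h m))"
    by (rule good_map[OF fh g])
  define c1 where "c1 = 1 / (1 - bvar n 1)"
  define c2 where "c2 = 1 - bvar n n"
  define P where "P = (\<lambda>m. coef_perm n (transp_fn 1 n) (h m))"
  have "good (s_op n 0 f) (ser_mult (ser_mult (\<lambda>m. c1 * Omega (bvar n 1) m)
        (\<lambda>m. c2 * Omega_inv (bvar n n) m)) P)"
    unfolding s_op_def c1_def c2_def P_def using good_mult[OF good_mult[OF g1 g2] g3] by simp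
  moreover have "ser_mult (ser_mult (\<lambda>m. c1 * Omega (bvar n 1) m)
        (\<lambda>m. c2 * Omega_inv (bvar n n) m)) P
     = (\<lambda>m. (c1 * c2) * ser_mult (ser_mult (Omega (bvar n 1)) (Omega_inv (bvar n n))) P m)"
    unfolding ser_mult_scale_left ser_mult_scale_right by (simp add: mult.assoc)
  moreover have "c1 * c2 = eA n 1 / eA n n"
    unfolding c1_def c2_def by (simp add: one_minus_bvar divide_inverse mult.commute)
  moreover have "s_op n 0 h = ser_mult (ser_mult (Omega (bvar n 1)) (Omega_inv (bvar n n))) P"
    by (simp add: s_op_def P_def)
  ultimately show ?thesis by simp
qed

lemma good_T0:
  assumes n: "2 \<le> n" and g: "good f h"
  shows "good (T_op n 0 f) (\<lambda>m. ((eA n 1 / eA n n) * s_op n 0 h m - h m) / (1 - eAlpha n 0))"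
  using good_lin[OF g good_s0[OF n g], of "1 - eAlpha n 0"]
  by (rule good_cong) (auto simp: T_op_def fun_eq_iff)

definition cw :: "nat \<Rightarrow> (nat \<Rightarrow> int) \<Rightarrow> coef" where
  "cw n \<mu> = (\<Prod>j\<in>{1..n}. power_int (eA n j) (\<mu> j))"

lemma cw_zero: "cw n (\<lambda>_. 0) = 1"
  by (simp add: cw_def)

lemma cw_perm:
  assumes iv: "invol n w" and n1: "1 \<le> n"
  shows "coef_perm n w (cw n \<mu>) = cw n (\<mu> \<circ> w)"
proof -
  interpret fhom "coef_perm n w" by (rule coef_perm_fhom[OF iv n1])
  have ww: "\<And>k. w (w k) = k" using iv unfolding invol_def by blast
  have rng: "\<And>k. (1 \<le> w k \<and> w k \<le> n) = (1 \<le> k \<and> k \<le> n)" using iv unfolding invol_def by blast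
  have bij: "bij_betw w {1..n} {1..n}"
    by (rule bij_betw_byWitness[where f' = w]) (use ww rng in auto)
  have "coef_perm n w (cw n \<mu>) = (\<Prod>j\<in>{1..n}. power_int (eA n (w j)) (\<mu> j))"
    unfolding cw_def hprod hpower_int by (rule prod.cong) (auto simp: coef_perm_eA[OF iv n1])
  also have "\<dots> = (\<Prod>j\<in>{1..n}. power_int (eA n (w (w j))) (\<mu> (w j)))"
    by (rule prod.reindex_bij_betw[OF bij, symmetric])
  also have "\<dots> = cw n (\<mu> \<circ> w)" by (simp add: cw_def ww)
  finally show ?thesis .
qed

lemma cw_bump:
  assumes a: "1 \<le> a" "a \<le> n"
  shows "cw n (\<lambda>j. \<mu> j + (if j = a then d else 0)) = cw n \<mu> * power_int (eA n a) d"
proof -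
  have fin: "finite {1..n}" and ain: "a \<in> {1..n}" using a by auto
  have "cw n (\<lambda>j. \<mu> j + (if j = a then d else 0))
      = power_int (eA n a) (\<mu> a + d) * (\<Prod>j\<in>{1..n} - {a}. power_int (eA n j) (\<mu> j + (if j = a then d else 0)))"
    unfolding cw_def prod.remove[OF fin ain] by simp
  also have "(\<Prod>j\<in>{1..n} - {a}. power_int (eA n j) (\<mu> j + (if j = a then d else 0)))
      = (\<Prod>j\<in>{1..n} - {a}. power_int (eA n j) (\<mu> j))"
    by (rule prod.cong) auto
  also have "power_int (eA n a) (\<mu> a + d) = power_int (eA n a) (\<mu> a) * power_int (eA n a) d"
    by (simp add: power_int_add eA_nz)
  finally show ?thesis
    unfolding cw_def prod.remove[OF fin ain] by (simp add: mult_ac)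
qed

definition lo :: "nat \<Rightarrow> nat \<Rightarrow> nat" where
  "lo n i = (if i = 0 then n else i)"

definition upd :: "nat \<Rightarrow> nat \<Rightarrow> (nat \<Rightarrow> int) \<Rightarrow> (nat \<Rightarrow> int)" where
  "upd n i \<mu> = (\<lambda>j. \<mu> j - (if j = lo n i then 1 else 0) + (if j = i + 1 then 1 else 0))"

lemma cw_upd:
  assumes "2 \<le> n" "i < n"
  shows "cw n (upd n i \<mu>) = cw n \<mu> * eA n (i + 1) / eA n (lo n i)"
proof -
  have l: "1 \<le> lo n i" "lo n i \<le> n" using assms by (auto simp: lo_def)
  have "upd n i \<mu> = (\<lambda>j. (\<lambda>j. \<mu> j + (if j = lo n i then -1 else 0)) j + (if j = i + 1 then 1 else 0))"
    by (auto simp: upd_def fun_eq_iff)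
  then have "cw n (upd n i \<mu>) = cw n (\<lambda>j. \<mu> j + (if j = lo n i then -1 else 0)) * power_int (eA n (i+1)) 1"
    using assms by (simp add: cw_bump)
  also have "\<dots> = cw n \<mu> * power_int (eA n (lo n i)) (-1) * eA n (i + 1)"
    using l by (simp add: cw_bump)
  finally show ?thesis by (simp add: power_int_minus divide_inverse mult_ac)
qed

lemma step_pos:
  assumes n: "2 \<le> n" and i: "1 \<le> i" "i < n" and g: "good f (\<lambda>m. cw n \<mu> * G m)"
    and c: "\<mu> i = \<mu> (i + 1) + 1"
  shows "good (T_op n i f) (\<lambda>m. cw n (upd n i \<mu>) * D_op n i G m)"
proof -
  have iv: "invol n (transp_fn i (i + 1))" using i by (intro transp_invol) auto
  interpret fhom "coef_perm n (transp_fn i (i + 1))" using iv n by (intro coef_perm_fhom) auto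
  have ms: "\<mu> \<circ> transp_fn i (i + 1) = upd n i \<mu>"
    using c i by (auto simp: fun_eq_iff transp_fn_def upd_def lo_def)
  have cu: "cw n \<mu> = cw n (upd n i \<mu>) * (eA n i / eA n (i + 1))"
    using cw_upd[OF n i(2), of \<mu>] i by (simp add: lo_def eA_nz)
  have ne: "1 - eAlpha n i \<noteq> 0" using eAlpha_ne1[OF n i(2)] .
  have ea: "eAlpha n i = eA n i / eA n (i + 1)" using i by (simp add: eAlpha_def)
  have "T_op n i (\<lambda>m. cw n \<mu> * G m) = (\<lambda>m. cw n (upd n i \<mu>) * D_op n i G m)"
  proof
    fix m
    have hm: "coef_perm n (transp_fn i (Suc i)) (x * y) = coef_perm n (transp_fn i (Suc i)) x * coef_perm n (transp_fn i (Suc i)) y" for x y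
      using hmult by simp
    have cwp: "coef_perm n (transp_fn i (Suc i)) (cw n \<mu>) = cw n (upd n i \<mu>)"
      using cw_perm[OF iv, of \<mu>] ms n by simp
    have "T_op n i (\<lambda>m. cw n \<mu> * G m) m
       = (cw n (upd n i \<mu>) * coef_perm n (transp_fn i (i + 1)) (G m) - cw n \<mu> * G m) / (1 - eAlpha n i)"
      using i by (simp add: T_op_def s_op_def hm cwp)
    also have "\<dots> = cw n (upd n i \<mu>) * D_op n i G m"
      using ne i unfolding D_op_def T_op_def s_op_def cu ea[symmetric]
      by (simp add: field_simps)
    finally show "T_op n i (\<lambda>m. cw n \<mu> * G m) m = cw n (upd n i \<mu>) * D_op n i G m" .
  qed
  then show ?thesis using good_T_pos[OF n i g] by simp
qed

lemma step_zero:
  assumes n: "2 \<le> n" and g: "good f (\<lambda>m. cw n \<mu> * G m)"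
    and c: "\<mu> n = \<mu> 1"
  shows "good (T_op n 0 f) (\<lambda>m. cw n (upd n 0 \<mu>) * D_op n 0 G m)"
proof -
  have iv: "invol n (transp_fn 1 n)" using n by (intro transp_invol) auto
  interpret fhom "coef_perm n (transp_fn 1 n)" using iv n by (intro coef_perm_fhom) auto
  have ms: "\<mu> \<circ> transp_fn 1 n = \<mu>"
    using c by (auto simp: fun_eq_iff transp_fn_def)
  have cu: "cw n (upd n 0 \<mu>) = cw n \<mu> * (eA n 1 / eA n n)"
    using cw_upd[of n 0 \<mu>] n by (simp add: lo_def)
  have ne: "1 - eAlpha n 0 \<noteq> 0" using eAlpha_ne1[OF n] n by simp
  have ea: "eAlpha n 0 = eA n n / eA n 1" by (simp add: eAlpha_def)
  have hm: "coef_perm n (transp_fn (Suc 0) n) (x * y) = coef_perm n (transp_fn (Suc 0) n) x * coef_perm n (transp_fn (Suc 0) n) y" for x y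
    using hmult by simp
  have cwp: "coef_perm n (transp_fn (Suc 0) n) (cw n \<mu>) = cw n \<mu>"
    using cw_perm[OF iv, of \<mu>] ms n by simp
  have sh: "s_op n 0 (\<lambda>m. cw n \<mu> * G m) = (\<lambda>m. cw n \<mu> * s_op n 0 G m)"
    unfolding s_op_def by (simp add: hm cwp ser_mult_scale_right)
  have "(\<lambda>m. ((eA n 1 / eA n n) * s_op n 0 (\<lambda>m. cw n \<mu> * G m) m - cw n \<mu> * G m) / (1 - eAlpha n 0))
      = (\<lambda>m. cw n (upd n 0 \<mu>) * D_op n 0 G m)"
  proof
    fix m
    have nz: "eA n 1 \<noteq> 0" "eA n n \<noteq> 0" by (simp_all add: eA_nz)
    have ne': "eA n 1 - eA n n \<noteq> 0" using ne nz unfolding ea by (simp add: field_simps)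
    show "((eA n 1 / eA n n) * s_op n 0 (\<lambda>m. cw n \<mu> * G m) m - cw n \<mu> * G m) / (1 - eAlpha n 0)
        = cw n (upd n 0 \<mu>) * D_op n 0 G m"
      unfolding sh cu D_op_def T_op_def ea using nz ne'
      by (simp add: field_simps)
  qed
  then show ?thesis using good_T0[OF n g] by simp
qed

definition condw :: "nat \<Rightarrow> nat \<Rightarrow> (nat \<Rightarrow> int) \<Rightarrow> bool" where
  "condw n i \<mu> \<longleftrightarrow> i < n \<and> (if i = 0 then \<mu> n = \<mu> 1 else \<mu> i = \<mu> (i + 1) + 1)"

fun valid :: "nat \<Rightarrow> (nat \<Rightarrow> int) \<Rightarrow> nat list \<Rightarrow> bool" where
  "valid n \<mu> [] = True"
| "valid n \<mu> (i # ws) = (condw n i \<mu> \<and> valid n (upd n i \<mu>) ws)"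

fun fin :: "nat \<Rightarrow> (nat \<Rightarrow> int) \<Rightarrow> nat list \<Rightarrow> (nat \<Rightarrow> int)" where
  "fin n \<mu> [] = \<mu>"
| "fin n \<mu> (i # ws) = fin n (upd n i \<mu>) ws"

lemma word_good:
  assumes n: "2 \<le> n"
  shows "valid n \<mu> ws \<Longrightarrow> good f (\<lambda>m. cw n \<mu> * G m) \<Longrightarrow>
    good (foldl (\<lambda>f i. T_op n i f) f ws) (\<lambda>m. cw n (fin n \<mu> ws) * foldl (\<lambda>f i. D_op n i f) G ws m)"
proof (induction ws arbitrary: f G \<mu>)
  case Nil then show ?case by simp
next
  case (Cons i ws)
  have c: "condw n i \<mu>" and v: "valid n (upd n i \<mu>) ws" using Cons.prems by auto
  have "good (T_op n i f) (\<lambda>m. cw n (upd n i \<mu>) * D_op n i G m)"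
  proof (cases "i = 0")
    case True
    then show ?thesis using step_zero[OF n Cons.prems(2)] c by (simp add: condw_def)
  next
    case False
    then show ?thesis using step_pos[OF n _ _ Cons.prems(2)] c by (simp add: condw_def)
  qed
  from Cons.IH[OF v this] show ?case by simp
qed

lemma valid_append: "valid n \<mu> (xs @ ys) = (valid n \<mu> xs \<and> valid n (fin n \<mu> xs) ys)"
  by (induction xs arbitrary: \<mu>) auto

lemma fin_append: "fin n \<mu> (xs @ ys) = fin n (fin n \<mu> xs) ys"
  by (induction xs arbitrary: \<mu>) auto

lemma aidx_range: "1 \<le> n \<Longrightarrow> 1 \<le> aidx n x \<and> aidx n x \<le> n"
proof -
  assume n: "1 \<le> n"
  have "0 \<le> x mod int n" "x mod int n < int n" using n by auto
  then show ?thesis unfolding aidx_def Let_def by auto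
qed

lemma aidx_eq_mod: "1 \<le> n \<Longrightarrow> (aidx n x = aidx n y) = (x mod int n = y mod int n)"
proof -
  assume n: "1 \<le> n"
  have a: "0 \<le> x mod int n" "x mod int n < int n" "0 \<le> y mod int n" "y mod int n < int n" using n by auto
  have ax: "aidx n x = (if x mod int n = 0 then n else nat (x mod int n))"
    using a(1) unfolding aidx_def Let_def by auto
  have ay: "aidx n y = (if y mod int n = 0 then n else nat (y mod int n))"
    using a(3) unfolding aidx_def Let_def by auto
  have aux: "((if u = 0 then N else nat u) = (if v = 0 then N else nat v)) = (u = v)"
    if "0 \<le> u" "u < int N" "0 \<le> v" "v < int N" for u v :: int and N :: nat
    using that by (auto simp: nat_eq_iff)
  show ?thesis unfolding ax ay using aux[OF a] .
qed

lemma aidx_inj: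
  assumes n: "1 \<le> n" and d: "\<bar>x - y\<bar> < int n"
  shows "(aidx n x = aidx n y) = (x = y)"
proof -
  have "(x mod int n = y mod int n) = (x = y)"
  proof
    assume "x mod int n = y mod int n"
    then have "int n dvd (x - y)" by (simp add: mod_eq_dvd_iff)
    then obtain k where k: "x - y = int n * k" by blast
    have "k = 0"
    proof (rule ccontr)
      assume "k \<noteq> 0"
      then have "\<bar>int n * k\<bar> \<ge> int n" using n by (simp add: abs_mult)
      then show False using d k by simp
    qed
    then show "x = y" using k by simp
  qed simp
  then show ?thesis using aidx_eq_mod[OF n] by simp
qed

lemma lo_residue:
  assumes "1 \<le> n"
  shows "lo n (residue n r c) = aidx n (int c - int r)"
  unfolding lo_def residue_def aidx_def Let_def by simp

lemma hi_residue:
  assumes n: "1 \<le> n"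
  shows "residue n r c + 1 = aidx n (int c - int r + 1)"
proof -
  define x where "x = int c - int r"
  have a: "0 \<le> x mod int n" "x mod int n < int n" using n by auto
  have "(x + 1) mod int n = (if x mod int n = int n - 1 then 0 else x mod int n + 1)"
  proof -
    have "(x + 1) mod int n = (x mod int n + 1) mod int n" by (simp add: mod_add_left_eq)
    also have "\<dots> = (if x mod int n = int n - 1 then 0 else x mod int n + 1)"
      using a by (auto simp: mod_pos_pos_trivial)
    finally show ?thesis .
  qed
  then show ?thesis unfolding residue_def aidx_def Let_def x_def[symmetric] using a
    by (auto simp: nat_add_distrib)
qed

lemma residue_lt: "1 \<le> n \<Longrightarrow> residue n r c < n"
  unfolding residue_def by (simp add: nat_less_iff)

lemma residue_zero:
  assumes n: "1 \<le> n" and d: "\<bar>int c - int r\<bar> < int n"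
  shows "(residue n r c = 0) = (c = r)"
proof -
  have "(residue n r c = 0) = ((int c - int r) mod int n = 0)"
    unfolding residue_def using n by (simp add: nat_eq_iff)
  also have "\<dots> = (int n dvd (int c - int r))" by auto
  also have "\<dots> = (int c - int r = 0)"
  proof
    assume "int n dvd (int c - int r)"
    then obtain k where k: "int c - int r = int n * k" by blast
    have "k = 0"
    proof (rule ccontr)
      assume "k \<noteq> 0"
      then have "\<bar>int n * k\<bar> \<ge> int n" using n by (simp add: abs_mult)
      then show False using d k by simp
    qed
    then show "int c - int r = 0" using k by simp
  qed simp
  finally show ?thesis by simp
qed

lemma sum_B:
  "(\<Sum>r'\<in>{1..<r}. (of_bool (y = 1 - int r') :: int)) = (if 2 - int r \<le> y \<and> y \<le> 0 then 1 else 0)"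
proof (cases "2 - int r \<le> y \<and> y \<le> 0")
  case True
  have mem: "nat (1 - y) \<in> {1..<r}" using True by (auto simp: nat_less_iff le_nat_iff)
  have "(\<Sum>r'\<in>{1..<r}. (of_bool (y = 1 - int r') :: int)) = (\<Sum>r'\<in>{1..<r}. if r' = nat (1 - y) then 1 else 0)"
    by (rule sum.cong) (use True in auto)
  also have "\<dots> = 1" using mem by (simp add: sum.delta)
  finally have e: "(\<Sum>r'\<in>{1..<r}. (of_bool (y = 1 - int r') :: int)) = 1" .
  moreover have "(if 2 - int r \<le> y \<and> y \<le> 0 then 1 else 0) = (1::int)" using True by simp
  ultimately show ?thesis by (simp only:)
next
  case False
  have "(\<Sum>r'\<in>{1..<r}. (of_bool (y = 1 - int r') :: int)) = 0"
    by (rule sum.neutral) (use False in auto)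
  moreover have "(if 2 - int r \<le> y \<and> y \<le> 0 then 1 else 0) = (0::int)" using False by simp
  ultimately show ?thesis by (simp only:)
qed

locale part =
  fixes n :: nat and lam :: "nat list"
  assumes n2: "2 \<le> n" and ip: "is_partition lam" and ks: "k_small n lam"
begin

definition L where "L = length lam"
definition H where "H = (if lam = [] then 0 else hd lam)"

lemma n1: "1 \<le> n" using n2 by simp

lemma HL: "H + L \<le> n" using ks unfolding k_small_def H_def L_def by simp

lemma mono: "i \<le> j \<Longrightarrow> j < L \<Longrightarrow> lam ! j \<le> lam ! i"
  using ip unfolding is_partition_def L_def sorted_wrt_iff_nth_less
  by (metis le_eq_less_or_eq)

lemma pos: "i < L \<Longrightarrow> 1 \<le> lam ! i"
  using ip unfolding is_partition_def L_def
  by (metis less_one not_le nth_mem)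

lemma le_H: "i < L \<Longrightarrow> lam ! i \<le> H"
proof -
  assume "i < L"
  then have "lam \<noteq> []" "hd lam = lam ! 0" unfolding L_def by (cases lam; auto)+
  then show ?thesis using mono[of 0 i] \<open>i < L\<close> unfolding H_def by simp
qed

definition A :: "nat \<Rightarrow> int" where "A r' = int (lam ! (r' - 1)) - int r' + 1"

definition st :: "nat \<Rightarrow> nat \<Rightarrow> (nat \<Rightarrow> int)" where
  "st r c = (\<lambda>j. (\<Sum>r'\<in>{1..<r}. of_bool (j = aidx n (A r')) - of_bool (j = aidx n (1 - int r')))
      + of_bool (j = aidx n (int c - int r + 1)) - of_bool (j = aidx n (1 - int r)))"

definition W where "W = {y. 1 - int L \<le> y \<and> y \<le> int H}"

lemma winj: "y \<in> W \<Longrightarrow> z \<in> W \<Longrightarrow> (aidx n y = aidx n z) = (y = z)"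
  using HL by (intro aidx_inj[OF n1]) (auto simp: W_def)

lemma cond_eval:
  assumes r: "1 \<le> r" "r \<le> L" and c: "c + 1 \<le> lam ! (r - 1)"
  defines "x \<equiv> int (c + 1) - int r"
  shows "st r c (aidx n x) - st r c (aidx n (x + 1)) = (if x = 0 then 0 else 1)"
proof -
  have lr: "lam ! (r - 1) \<le> H" using le_H r by simp
  have xW: "x \<in> W" "x + 1 \<in> W" "1 - int r \<in> W" using r c lr unfolding W_def x_def by auto
  have AW: "A r' \<in> W" "x + 1 < A r'" if "r' \<in> {1..<r}" for r'
  proof -
    have "lam ! (r - 1) \<le> lam ! (r' - 1)" using mono[of "r' - 1" "r - 1"] that r by auto
    moreover have "lam ! (r' - 1) \<le> H" using le_H that r by auto
    ultimately show "A r' \<in> W" "x + 1 < A r'" using that r c unfolding W_def A_def x_def by auto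
  qed
  have BW: "1 - int r' \<in> W" if "r' \<in> {1..<r}" for r' using that r unfolding W_def by auto
  have ev: "st r c (aidx n y) = - (if 2 - int r \<le> y \<and> y \<le> 0 then 1 else 0) + of_bool (y = x) - of_bool (y = 1 - int r)"
    if yW: "y \<in> W" and yx: "y \<le> x + 1" for y
  proof -
    have "(\<Sum>r'\<in>{1..<r}. of_bool (aidx n y = aidx n (A r')) - of_bool (aidx n y = aidx n (1 - int r')))
        = (\<Sum>r'\<in>{1..<r}. - (of_bool (y = 1 - int r') :: int))"
    proof (rule sum.cong[OF refl])
      fix r' assume h: "r' \<in> {1..<r}"
      have "aidx n y \<noteq> aidx n (A r')" using winj[OF yW AW(1)[OF h]] AW(2)[OF h] yx by simp
      moreover have "(aidx n y = aidx n (1 - int r')) = (y = 1 - int r')" using winj[OF yW BW[OF h]] .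
      ultimately show "of_bool (aidx n y = aidx n (A r')) - of_bool (aidx n y = aidx n (1 - int r'))
          = - (of_bool (y = 1 - int r') :: int)" by simp
    qed
    also have "\<dots> = - (if 2 - int r \<le> y \<and> y \<le> 0 then 1 else 0)"
      unfolding sum_negf sum_B by simp
    finally have s: "(\<Sum>r'\<in>{1..<r}. of_bool (aidx n y = aidx n (A r')) - of_bool (aidx n y = aidx n (1 - int r')))
        = - (if 2 - int r \<le> y \<and> y \<le> 0 then 1 else (0::int))" .
    have e1: "int c - int r + 1 = x" unfolding x_def by simp
    show ?thesis unfolding st_def s e1 using winj[OF yW xW(1)] winj[OF yW xW(3)] by simp
  qed
  have "st r c (aidx n x) = - (if 2 - int r \<le> x \<and> x \<le> 0 then 1 else 0) + 1 - of_bool (x = 1 - int r)"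
    using ev[OF xW(1)] by simp
  moreover have "st r c (aidx n (x + 1)) = - (if 2 - int r \<le> x + 1 \<and> x + 1 \<le> 0 then 1 else 0) - of_bool (x + 1 = 1 - int r)"
    using ev[OF xW(2)] by simp
  moreover have "1 - int r \<le> x" unfolding x_def by simp
  ultimately show ?thesis using r by auto
qed

end

context part begin

lemma upd_st:
  "upd n (residue n r (c + 1)) (st r c) = st r (c + 1)"
proof -
  have eq: "int (c + 1) - int r = int c - int r + 1" by simp
  have lo: "lo n (residue n r (c + 1)) = aidx n (int c - int r + 1)"
    using lo_residue[OF n1, of r "c + 1"] unfolding eq .
  have hi: "residue n r (c + 1) + 1 = aidx n (int (c + 1) - int r + 1)"
    using hi_residue[OF n1, of r "c + 1"] by simp
  show ?thesis unfolding upd_def lo hi st_def by (rule ext) simp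
qed

lemma cond_st:
  assumes r: "1 \<le> r" "r \<le> L" and c: "c + 1 \<le> lam ! (r - 1)"
  shows "condw n (residue n r (c + 1)) (st r c)"
proof -
  define x where "x = int (c + 1) - int r"
  have lr: "lam ! (r - 1) \<le> H" using le_H r by simp
  have xb: "\<bar>int (c + 1) - int r\<bar> < int n" using r c lr HL by auto
  have z: "(residue n r (c + 1) = 0) = (c + 1 = r)" by (rule residue_zero[OF n1 xb])
  have lo: "lo n (residue n r (c + 1)) = aidx n x"
    using lo_residue[OF n1, of r "c + 1"] by (simp add: x_def)
  have hi: "residue n r (c + 1) + 1 = aidx n (x + 1)"
    using hi_residue[OF n1, of r "c + 1"] by (simp add: x_def)
  have ev: "st r c (aidx n x) - st r c (aidx n (x + 1)) = (if x = 0 then 0 else 1)"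
    unfolding x_def by (rule cond_eval[OF r c])
  have lt: "residue n r (c + 1) < n" by (rule residue_lt[OF n1])
  show ?thesis
  proof (cases "residue n r (c + 1) = 0")
    case True
    then have "x = 0" using z by (simp add: x_def)
    moreover have "aidx n x = n" using lo True by (simp add: lo_def)
    moreover have "aidx n (x + 1) = 1" using hi True by simp
    ultimately show ?thesis using ev True lt by (simp add: condw_def)
  next
    case False
    then have "x \<noteq> 0" using z by (simp add: x_def)
    moreover have "aidx n x = residue n r (c + 1)" using lo False by (simp add: lo_def)
    ultimately show ?thesis using ev False lt hi by (simp add: condw_def)
  qed
qed

lemma row:
  assumes r: "1 \<le> r" "r \<le> L"
  shows "c \<le> lam ! (r - 1) \<Longrightarrow> valid n (st r 0) (map (residue n r) [1..<c+1]) \<and>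
     fin n (st r 0) (map (residue n r) [1..<c+1]) = st r c"
proof (induction c)
  case 0 then show ?case by simp
next
  case (Suc c)
  have e: "[1..<Suc c + 1] = [1..<c + 1] @ [c + 1]" by simp
  from Suc have ih: "valid n (st r 0) (map (residue n r) [1..<c+1])"
    "fin n (st r 0) (map (residue n r) [1..<c+1]) = st r c" by auto
  have cd: "condw n (residue n r (c + 1)) (st r c)" using cond_st[OF r] Suc.prems by simp
  show ?case unfolding e map_append valid_append fin_append ih(2)
    using ih(1) cd upd_st[of r c] by simp
qed

lemma st_next: "1 \<le> r \<Longrightarrow> st r (lam ! (r - 1)) = st (r + 1) 0"
proof -
  assume r: "1 \<le> r"
  have s: "{1..<r + 1} = insert r {1..<r}" using r by auto
  show ?thesis unfolding st_def s
    by (rule ext) (simp add: A_def algebra_simps)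
qed

lemma st_first: "st 1 0 = (\<lambda>_. 0)"
  unfolding st_def by simp

definition rw :: "nat \<Rightarrow> nat list" where
  "rw r = map (\<lambda>c. residue n r c) [1..<lam ! (r - 1) + 1]"

lemma rows:
  "R \<le> L \<Longrightarrow> valid n (\<lambda>_. 0) (concat (map rw [1..<R+1])) \<and>
     fin n (\<lambda>_. 0) (concat (map rw [1..<R+1])) = st (R + 1) 0"
proof (induction R)
  case 0 then show ?case using st_first by simp
next
  case (Suc R)
  have e: "[1..<Suc R + 1] = [1..<R + 1] @ [R + 1]" by simp
  from Suc have ih: "valid n (\<lambda>_. 0) (concat (map rw [1..<R+1]))"
    "fin n (\<lambda>_. 0) (concat (map rw [1..<R+1])) = st (R + 1) 0" by auto
  have rr: "valid n (st (R + 1) 0) (rw (R + 1)) \<and> fin n (st (R + 1) 0) (rw (R + 1)) = st (R + 1) (lam ! R)"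
    using row[of "R + 1" "lam ! R"] Suc.prems unfolding rw_def by (simp add: comp_def)
  have sn: "st (R + 1) (lam ! R) = st (Suc R + 1) 0" using st_next[of "R + 1"] by simp
  show ?case unfolding e map_append concat_append valid_append fin_append ih(2)
    using ih(1) rr sn by simp
qed

lemma res_word_eq: "res_word n lam = concat (map rw [1..<L+1])"
  unfolding res_word_def rw_def L_def ..

lemma valid_word: "valid n (\<lambda>_. 0) (res_word n lam)"
  using rows[of L] unfolding res_word_eq by simp

lemma fin_word: "fin n (\<lambda>_. 0) (res_word n lam) = st (L + 1) 0"
  using rows[of L] unfolding res_word_eq by simp

end

lemma cw_add: "cw n (\<lambda>j. f j + g j) = cw n f * cw n g"
  unfolding cw_def by (simp add: power_int_add eA_nz prod.distrib)

lemma cw_diff: "cw n (\<lambda>j. f j - g j) = cw n f / cw n g"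
  unfolding cw_def by (simp add: power_int_diff eA_nz prod_dividef)

lemma cw_sum: "finite A \<Longrightarrow> cw n (\<lambda>j. \<Sum>r\<in>A. f r j) = (\<Prod>r\<in>A. cw n (f r))"
proof (induction A rule: finite_induct)
  case empty then show ?case using cw_zero by simp
next
  case (insert x F)
  then show ?case using cw_add[of n "f x" "\<lambda>j. \<Sum>r\<in>F. f r j"] by simp
qed

lemma cw_ind: "1 \<le> p \<Longrightarrow> p \<le> n \<Longrightarrow> cw n (\<lambda>j. of_bool (j = p)) = eA n p"
  using cw_bump[of p n "\<lambda>_. 0" 1] cw_zero[of n] by (simp add: of_bool_def)

lemma tele:
  fixes g :: "int \<Rightarrow> coef"
  assumes nz: "\<And>t. g t \<noteq> 0"
  shows "(\<Prod>i\<in>{1..K}. g (int i + s) / g (int i - 1 + s)) = g (int K + s) / g s"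
proof (induction K)
  case 0 then show ?case using nz by simp
next
  case (Suc K)
  have "(\<Prod>i\<in>{1..Suc K}. g (int i + s) / g (int i - 1 + s))
      = (\<Prod>i\<in>{1..K}. g (int i + s) / g (int i - 1 + s)) * (g (int (Suc K) + s) / g (int (Suc K) - 1 + s))"
    by (simp add: prod.cl_ivl_Suc)
  also have "\<dots> = g (int K + s) / g s * (g (int (Suc K) + s) / g (int K + s))"
    unfolding Suc by simp
  also have "\<dots> = g (int (Suc K) + s) / g s" using nz by (simp add: field_simps)
  finally show ?case .
qed

context part begin

definition gg :: "int \<Rightarrow> coef" where "gg t = eA n (aidx n t)"

lemma gg_nz: "gg t \<noteq> 0" by (simp add: gg_def eA_nz)

lemma cw_st: "cw n (st R 0) = (\<Prod>r\<in>{1..<R}. gg (A r) / gg (1 - int r))"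
proof -
  have e: "st R 0 = (\<lambda>j. \<Sum>r'\<in>{1..<R}. of_bool (j = aidx n (A r')) - of_bool (j = aidx n (1 - int r')))"
    unfolding st_def by (rule ext) simp
  have "cw n (st R 0) = cw n (\<lambda>j. \<Sum>r'\<in>{1..<R}. of_bool (j = aidx n (A r')) - of_bool (j = aidx n (1 - int r')))"
    unfolding e ..
  also have "\<dots> = (\<Prod>r\<in>{1..<R}. cw n (\<lambda>j. of_bool (j = aidx n (A r)) - of_bool (j = aidx n (1 - int r))))"
    by (rule cw_sum) simp
  also have "\<dots> = (\<Prod>r\<in>{1..<R}. gg (A r) / gg (1 - int r))"
  proof (rule prod.cong[OF refl])
    fix r
    have a1: "1 \<le> aidx n (A r)" "aidx n (A r) \<le> n" using aidx_range[OF n1] by auto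
    have a2: "1 \<le> aidx n (1 - int r)" "aidx n (1 - int r) \<le> n" using aidx_range[OF n1] by auto
    show "cw n (\<lambda>j. of_bool (j = aidx n (A r)) - of_bool (j = aidx n (1 - int r))) = gg (A r) / gg (1 - int r)"
      unfolding cw_diff cw_ind[OF a1] cw_ind[OF a2] gg_def ..
  qed
  finally show ?thesis .
qed

lemma conj_app: "conj_part (xs @ [v]) i = conj_part xs i + (if i \<le> v then 1 else 0)"
  unfolding conj_part_def by simp

lemma conj_full:
  assumes R: "R < L" and i: "i \<le> lam ! R"
  shows "conj_part (take R lam) i = R"
proof -
  have "\<forall>x\<in>set (take R lam). i \<le> x"
  proof
    fix x assume "x \<in> set (take R lam)"
    then obtain k where k: "k < length (take R lam)" "x = take R lam ! k" by (metis in_set_conv_nth)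
    then have "k < R" "x = lam ! k" by auto
    then show "i \<le> x" using mono[of k R] R i by auto
  qed
  then have "filter (\<lambda>x. i \<le> x) (take R lam) = take R lam" by (simp add: filter_id_conv)
  then show ?thesis unfolding conj_part_def using R by (simp add: L_def)
qed

lemma diag_step:
  assumes R: "R < L"
  shows "diag_factor n (take (Suc R) lam) = diag_factor n (take R lam) * (gg (A (R + 1)) / gg (1 - int (R + 1)))"
proof -
  define v where "v = lam ! R"
  define Lo where "Lo = take R lam"
  define Lr where "Lr = take (Suc R) lam"
  have Lr: "Lr = Lo @ [v]" unfolding Lr_def Lo_def v_def using R by (simp add: L_def take_Suc_conv_app_nth)
  have lenLo: "length Lo = R" using R unfolding Lo_def L_def by simp
  have nthLo: "Lo ! (i - 1) = lam ! (i - 1)" if "1 \<le> i" "i \<le> R" for i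
    using that unfolding Lo_def by simp
  have nthLr: "Lr ! (i - 1) = lam ! (i - 1)" if "1 \<le> i" "i \<le> R + 1" for i
    using that R unfolding Lr_def L_def by simp
  have cLr: "conj_part Lr i = conj_part Lo i + (if i \<le> v then 1 else 0)" for i
    unfolding Lr conj_app ..
  have cLo: "conj_part Lo i = R" if "i \<le> v" for i
    using conj_full[OF R, of i] that unfolding Lo_def v_def by simp
  define N where "N i = gg (int (lam ! (i - 1)) - int i + 1)" for i
  have DLo: "diag_factor n Lo = (\<Prod>i\<in>diag Lo. N i / gg (int i - int (conj_part Lo i)))"
    unfolding diag_factor_def N_def gg_def
  proof (rule prod.cong[OF refl])
    fix i assume "i \<in> diag Lo"
    then have "1 \<le> i" "i \<le> R" unfolding diag_def lenLo by auto
    then show "eA n (aidx n (int (Lo ! (i - 1)) - int i + 1)) / eA n (aidx n (int i - int (conj_part Lo i)))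
      = eA n (aidx n (int (lam ! (i - 1)) - int i + 1)) / eA n (aidx n (int i - int (conj_part Lo i)))"
      using nthLo by simp
  qed
  have DLr: "diag_factor n Lr = (\<Prod>i\<in>diag Lr. N i / gg (int i - int (conj_part Lr i)))"
    unfolding diag_factor_def N_def gg_def
  proof (rule prod.cong[OF refl])
    fix i assume "i \<in> diag Lr"
    then have "1 \<le> i" "i \<le> R + 1" unfolding diag_def Lr using lenLo by auto
    then show "eA n (aidx n (int (Lr ! (i - 1)) - int i + 1)) / eA n (aidx n (int i - int (conj_part Lr i)))
      = eA n (aidx n (int (lam ! (i - 1)) - int i + 1)) / eA n (aidx n (int i - int (conj_part Lr i)))"
      using nthLr by simp
  qed
  have AR: "A (R + 1) = int v - int R" unfolding A_def v_def by simp
  show ?thesis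
  proof (cases "R + 1 \<le> v")
    case True
    have dLo: "diag Lo = {1..R}"
    proof -
      have "i \<le> lam ! (i - 1)" if "1 \<le> i" "i \<le> R" for i
      proof -
        have "lam ! R \<le> lam ! (i - 1)" using mono[of "i - 1" R] that R by simp
        then show ?thesis using that True unfolding v_def by simp
      qed
      then show ?thesis unfolding diag_def using nthLo lenLo by auto
    qed
    have dLr: "diag Lr = {1..R + 1}"
    proof -
      have "i \<le> lam ! (i - 1)" if "1 \<le> i" "i \<le> R + 1" for i
      proof -
        have "lam ! R \<le> lam ! (i - 1)" using mono[of "i - 1" R] that R by simp
        then show ?thesis using that True unfolding v_def by simp
      qed
      moreover have "length Lr = R + 1" using Lr lenLo by simp
      ultimately show ?thesis unfolding diag_def using nthLr by auto
    qed
    have "diag_factor n Lr = (\<Prod>i\<in>{1..R + 1}. N i / gg (int i - int R - 1))"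
      unfolding DLr dLr
    proof (rule prod.cong[OF refl])
      fix i assume "i \<in> {1..R + 1}"
      then have "i \<le> v" using True by auto
      then have "int (conj_part Lr i) = int R + 1" using cLr cLo by simp
      then show "N i / gg (int i - int (conj_part Lr i)) = N i / gg (int i - int R - 1)"
        by (simp add: algebra_simps)
    qed
    also have "\<dots> = (\<Prod>i\<in>{1..R}. N i / gg (int i - int R - 1)) * (N (R + 1) / gg 0)"
      by (simp add: prod.cl_ivl_Suc)
    also have "(\<Prod>i\<in>{1..R}. N i / gg (int i - int R - 1))
        = (\<Prod>i\<in>{1..R}. (N i / gg (int i - int R)) * (gg (int i + (- int R)) / gg (int i - 1 + (- int R))))"
    proof (rule prod.cong[OF refl])
      fix i
      have e1: "int i - 1 + (- int R) = int i - int R - 1" by simp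
      have e2: "int i + (- int R) = int i - int R" by simp
      show "N i / gg (int i - int R - 1) = (N i / gg (int i - int R)) * (gg (int i + (- int R)) / gg (int i - 1 + (- int R)))"
        unfolding e1 e2 using gg_nz[of "int i - int R"] by simp
    qed
    also have "\<dots> = diag_factor n Lo * (gg (int R + (- int R)) / gg (- int R))"
    proof -
      have t: "(\<Prod>i\<in>{1..R}. gg (int i + (- int R)) / gg (int i - 1 + (- int R))) = gg (int R + (- int R)) / gg (- int R)"
        by (rule tele[OF gg_nz])
      have d: "(\<Prod>i\<in>{1..R}. N i / gg (int i - int R)) = diag_factor n Lo"
        unfolding DLo dLo
      proof (rule prod.cong[OF refl])
        fix i assume "i \<in> {1..R}"
        then have "i \<le> v" using True by auto
        then show "N i / gg (int i - int R) = N i / gg (int i - int (conj_part Lo i))" using cLo by simp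
      qed
      show ?thesis unfolding prod.distrib t d ..
    qed
    finally have "diag_factor n Lr = diag_factor n Lo * (gg 0 / gg (- int R)) * (N (R + 1) / gg 0)" by simp
    moreover have "N (R + 1) = gg (A (R + 1))" unfolding N_def A_def by simp
    ultimately show ?thesis unfolding Lr_def Lo_def using gg_nz by (simp add: field_simps)
  next
    case False
    have dEq: "diag Lr = diag Lo"
    proof -
      have "length Lr = R + 1" using Lr lenLo by simp
      moreover have "\<not> R + 1 \<le> Lr ! R" using False Lr lenLo by (simp add: nth_append)
      ultimately show ?thesis unfolding diag_def using nthLr nthLo lenLo
        by (auto simp: le_Suc_eq)
    qed
    have sub: "{1..v} \<subseteq> diag Lo"
    proof
      fix i assume i: "i \<in> {1..v}"
      then have "i \<le> R" using False by auto
      moreover have "i \<le> lam ! (i - 1)"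
      proof -
        have "lam ! R \<le> lam ! (i - 1)" using mono[of "i - 1" R] i R \<open>i \<le> R\<close> by simp
        then show ?thesis using i unfolding v_def by simp
      qed
      ultimately show "i \<in> diag Lo" using i unfolding diag_def using nthLo lenLo by auto
    qed
    have fin: "finite (diag Lo)" unfolding diag_def by simp
    define \<rho> where "\<rho> i = (if i \<le> v then gg (int i + (- int R)) / gg (int i - 1 + (- int R)) else 1)" for i
    have "diag_factor n Lr = (\<Prod>i\<in>diag Lo. (N i / gg (int i - int (conj_part Lo i))) * \<rho> i)"
      unfolding DLr dEq
    proof (rule prod.cong[OF refl])
      fix i assume "i \<in> diag Lo"
      show "N i / gg (int i - int (conj_part Lr i)) = N i / gg (int i - int (conj_part Lo i)) * \<rho> i"
      proof (cases "i \<le> v")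
        case True
        then show ?thesis unfolding \<rho>_def cLr cLo[OF True] using gg_nz by (simp add: field_simps)
      next
        case False
        then show ?thesis unfolding \<rho>_def cLr by simp
      qed
    qed
    also have "\<dots> = diag_factor n Lo * (\<Prod>i\<in>diag Lo. \<rho> i)"
      unfolding prod.distrib DLo ..
    also have "(\<Prod>i\<in>diag Lo. \<rho> i) = (\<Prod>i\<in>{1..v}. \<rho> i)"
      by (rule prod.mono_neutral_right[OF fin sub]) (auto simp: \<rho>_def diag_def)
    also have "\<dots> = (\<Prod>i\<in>{1..v}. gg (int i + (- int R)) / gg (int i - 1 + (- int R)))"
      by (rule prod.cong) (auto simp: \<rho>_def)
    also have "\<dots> = gg (int v + (- int R)) / gg (- int R)"
      by (rule tele[OF gg_nz])
    finally show ?thesis unfolding Lr_def Lo_def AR by simp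
  qed
qed

lemma diag_rows: "R \<le> L \<Longrightarrow> (\<Prod>r\<in>{1..<R+1}. gg (A r) / gg (1 - int r)) = diag_factor n (take R lam)"
proof (induction R)
  case 0
  have "diag (take 0 lam) = {}" by (auto simp: diag_def)
  then show ?case by (simp add: diag_factor_def)
next
  case (Suc R)
  have s: "{1..<Suc R + 1} = insert (R + 1) {1..<R + 1}" by auto
  show ?case unfolding s using Suc diag_step[of R] by (simp add: mult.commute)
qed

lemma cw_final: "cw n (st (L + 1) 0) = diag_factor n lam"
  unfolding cw_st using diag_rows[of L] by (simp add: L_def)

end

theorem proposition4p1:
  fixes n :: nat and lam :: "nat list"
  assumes "2 \<le> n" and "is_partition lam" and "k_small n lam"
  shows "sigma_op (g_k n lam) = ser_smult (diag_factor n lam) (gt_k n lam)"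
proof -
  interpret part n lam using assms by unfold_locales
  have g0: "good ser_one (\<lambda>m. cw n (\<lambda>_. 0) * ser_one m)"
    using good_one by (simp add: cw_zero)
  have "good (g_k n lam) (\<lambda>m. cw n (fin n (\<lambda>_. 0) (res_word n lam)) * gt_k n lam m)"
    unfolding g_k_def gt_k_def by (rule word_good[OF assms(1) valid_word g0])
  then have "sigma_op (g_k n lam) = (\<lambda>m. cw n (fin n (\<lambda>_. 0) (res_word n lam)) * gt_k n lam m)"
    by (rule good_sigma)
  then show ?thesis unfolding fin_word cw_final by (simp add: ser_smult_def fun_eq_iff)
qed

end
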